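(* (a) For the triangle $C_3$, $Y_{C_3}=p_1^3+2p_3$. (b) For the star graph $S_n$ ($n\ge1$), $$Y_{S_n}=\sum_{\substack{0\le r\le n-1\\ r \text{ even}}}\binom{n-1}{r}p_{r+1}\,p_1^{\,n-r-1},$$ i.e. $Y_{S_n}=\binom{n-1}{0}p_1^n+\binom{n-1}{2}p_3p_1^{n-3}+\cdots+\binom{n-1}{n-1}p_n$ if $n$ is odd and $Y_{S_n}=\binom{n-1}{0}p_1^n+\binom{n-1}{2}p_3p_1^{n-3}+\cdots+\binom{n-1}{n-2}p_{n-1}p_1$ if $n$ is even. Moreover, the set $\{Y_{S_n}: n \text{ odd}\}$ is algebraically independent over $\mathbb{Q}$.
   Context: For a finite simple graph $G=(V,E)$ with $V=\{v_1,\dots,v_n\}$, the chromatic symmetric function is $X_G=\sum_\kappa x_{\kappa(v_1)}\cdots x_{\kappa(v_n)}$, summed over all proper colorings $\kappa:V\to\{1,2,\dots\}$ (maps with $\kappa(v_i)\ne\kappa(v_j)$ whenever $\{v_i,v_j\}\in E$). Let $p_r$ denote power sum symmetric functions and $\omega$ the standard involution on symmetric functions with $\omega(p_r)=(-1)^{r-1}p_r$. The near chromatic symmetric function of $G$ is $Y_G=(X_G+\omega(X_G))/2$. The triangle $C_3$ is the cycle on three vertices; the star graph $S_n$ is the tree on $n$ vertices with one internal vertex adjacent to $n-1$ leaves ($S_1$ is a single vertex, $S_2$ a single edge). *)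

theory Defs
  imports Complex_Main "HOL-Library.Poly_Mapping" "HOL-Library.FuncSet"
begin

text \<open>Symmetric functions (more generally, formal power series in the countably many
variables x_0, x_1, x_2, ...) with rational coefficients, represented by their coefficient
function: a monomial is an exponent vector alpha (finitely supported), and f alpha is
the coefficient of x^alpha.\<close>

type_synonym sf = "(nat \<Rightarrow>\<^sub>0 nat) \<Rightarrow> rat"

definition sf_zero :: sf where "sf_zero = (\<lambda>\<alpha>. 0)"
definition sf_one :: sf where "sf_one = (\<lambda>\<alpha>. if \<alpha> = 0 then 1 else 0)"
definition sf_add :: "sf \<Rightarrow> sf \<Rightarrow> sf" where "sf_add f g = (\<lambda>\<alpha>. f \<alpha> + g \<alpha>)"
definition sf_smult :: "rat \<Rightarrow> sf \<Rightarrow> sf" where "sf_smult c f = (\<lambda>\<alpha>. c * f \<alpha>)"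

text \<open>Product of formal power series (Cauchy product; the index set is finite).\<close>
definition sf_mult :: "sf \<Rightarrow> sf \<Rightarrow> sf" where
  "sf_mult f g = (\<lambda>\<alpha>. \<Sum>(\<beta>, \<gamma>) \<in> {(\<beta>, \<gamma>). \<beta> + \<gamma> = \<alpha>}. f \<beta> * g \<gamma>)"

primrec sf_pow :: "sf \<Rightarrow> nat \<Rightarrow> sf" where
  "sf_pow f 0 = sf_one"
| "sf_pow f (Suc k) = sf_mult f (sf_pow f k)"

definition sf_sum :: "('i \<Rightarrow> sf) \<Rightarrow> 'i set \<Rightarrow> sf" where
  "sf_sum g A = (\<lambda>\<alpha>. \<Sum>i\<in>A. g i \<alpha>)"

definition psum :: "nat \<Rightarrow> sf" where
  "psum r = (\<lambda>\<alpha>. if \<exists>i. \<alpha> = Poly_Mapping.single i r then 1 else 0)"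

text \<open>p_lambda for a partition lambda given as a list of positive parts.\<close>
definition p_part :: "nat list \<Rightarrow> sf" where
  "p_part lam = foldr (\<lambda>r acc. sf_mult (psum r) acc) lam sf_one"

definition sf_lin :: "(rat \<times> nat list) list \<Rightarrow> sf" where
  "sf_lin L = (\<lambda>\<alpha>. \<Sum>(c, lam) \<leftarrow> L. c * p_part lam \<alpha>)"

definition valid_plin :: "(rat \<times> nat list) list \<Rightarrow> bool" where
  "valid_plin L \<longleftrightarrow> (\<forall>(c, lam) \<in> set L. \<forall>r \<in> set lam. 0 < r)"

text \<open>omega(p_lambda) = prod_i (-1)^(lambda_i - 1) p_lambda.\<close>
definition omega_sign :: "nat list \<Rightarrow> rat" where
  "omega_sign lam = prod_list (map (\<lambda>r. (-1) ^ (r - 1)) lam)"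

text \<open>The involution omega on Lambda_Q (= the Q-span of the p_lambda), the linear
(indeed ring) map with omega(p_r) = (-1)^(r-1) p_r.  An element of Lambda_Q is written
as a finite combination of p_lambda and omega is applied termwise.\<close>
definition sf_omega :: "sf \<Rightarrow> sf" where
  "sf_omega f = sf_lin (map (\<lambda>(c, lam). (omega_sign lam * c, lam))
                        (SOME L. valid_plin L \<and> f = sf_lin L))"

text \<open>Colours are natural numbers (variables x_0, x_1, ...).\<close>
definition proper_colouring :: "'a set \<Rightarrow> ('a \<Rightarrow> 'a \<Rightarrow> bool) \<Rightarrow> ('a \<Rightarrow> nat) \<Rightarrow> bool" where
  "proper_colouring V E \<kappa> \<longleftrightarrow> (\<forall>u\<in>V. \<forall>v\<in>V. E u v \<longrightarrow> \<kappa> u \<noteq> \<kappa> v)"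

definition chromatic_sf :: "'a set \<Rightarrow> ('a \<Rightarrow> 'a \<Rightarrow> bool) \<Rightarrow> sf" where
  "chromatic_sf V E = (\<lambda>\<alpha>. of_nat (card {\<kappa> \<in> V \<rightarrow>\<^sub>E (UNIV :: nat set).
        proper_colouring V E \<kappa> \<and> (\<forall>i. card {v \<in> V. \<kappa> v = i} = Poly_Mapping.lookup \<alpha> i)}))"

definition near_chromatic_sf :: "'a set \<Rightarrow> ('a \<Rightarrow> 'a \<Rightarrow> bool) \<Rightarrow> sf" where
  "near_chromatic_sf V E = sf_smult (1/2) (sf_add (chromatic_sf V E) (sf_omega (chromatic_sf V E)))"

definition triangle_V :: "nat set" where "triangle_V = {0, 1, 2}"
definition triangle_E :: "nat \<Rightarrow> nat \<Rightarrow> bool" where "triangle_E u v \<longleftrightarrow> u \<noteq> v"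

definition star_V :: "nat \<Rightarrow> nat set" where "star_V n = {0..<n}"
definition star_E :: "nat \<Rightarrow> nat \<Rightarrow> bool" where
  "star_E u v \<longleftrightarrow> u \<noteq> v \<and> (u = 0 \<or> v = 0)"

definition sf_monomial :: "sf list \<Rightarrow> nat list \<Rightarrow> sf" where
  "sf_monomial ys e = foldr (\<lambda>(y, k) acc. sf_mult (sf_pow y k) acc) (zip ys e) sf_one"

definition alg_indep_Q :: "sf set \<Rightarrow> bool" where
  "alg_indep_Q A \<longleftrightarrow>
     (\<forall>ys M (c :: nat list \<Rightarrow> rat).
        distinct ys \<and> set ys \<subseteq> A \<and> finite M \<and> (\<forall>e\<in>M. length e = length ys) \<and>
        sf_sum (\<lambda>e. sf_smult (c e) (sf_monomial ys e)) M = sf_zero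
        \<longrightarrow> (\<forall>e\<in>M. c e = 0))"

end

theory Submission
  imports Defs "HOL-Library.Multiset_Order"
begin

abbreviation lk where "lk \<equiv> Poly_Mapping.lookup"
abbreviation ks where "ks \<equiv> Poly_Mapping.keys"
abbreviation sng where "sng \<equiv> Poly_Mapping.single"

definition Dp :: "(nat \<Rightarrow>\<^sub>0 nat) \<Rightarrow> ((nat \<Rightarrow>\<^sub>0 nat) \<times> (nat \<Rightarrow>\<^sub>0 nat)) set" where
  "Dp \<alpha> = {(\<beta>, \<gamma>). \<beta> + \<gamma> = \<alpha>}"

lemma finite_below: "finite {\<beta>::nat \<Rightarrow>\<^sub>0 nat. \<forall>i. lk \<beta> i \<le> lk \<alpha> i}"
proof -
  let ?A = "{\<beta>::nat \<Rightarrow>\<^sub>0 nat. \<forall>i. lk \<beta> i \<le> lk \<alpha> i}"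
  let ?f = "\<lambda>\<beta>::nat \<Rightarrow>\<^sub>0 nat. restrict (lk \<beta>) (ks \<alpha>)"
  have "?f ` ?A \<subseteq> PiE (ks \<alpha>) (\<lambda>i. {..lk \<alpha> i})" by auto
  hence "finite (?f ` ?A)" by (rule finite_subset) (auto intro!: finite_PiE)
  moreover have "inj_on ?f ?A"
  proof (rule inj_onI)
    fix x y assume x: "x \<in> ?A" and y: "y \<in> ?A" and e: "?f x = ?f y"
    show "x = y"
    proof (rule poly_mapping_eqI)
      fix k show "lk x k = lk y k"
      proof (cases "k \<in> ks \<alpha>")
        case True then show ?thesis using fun_cong[OF e, of k] by simp
      next
        case False then have "lk \<alpha> k = 0" by (simp add: in_keys_iff)
        then show ?thesis using x y by (metis (mono_tags, lifting) le_zero_eq mem_Collect_eq)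
      qed
    qed
  qed
  ultimately show ?thesis by (rule finite_imageD)
qed

lemma Dp_eq: "Dp \<alpha> = (\<lambda>\<beta>. (\<beta>, \<alpha> - \<beta>)) ` {\<beta>. \<forall>i. lk \<beta> i \<le> lk \<alpha> i}"
proof (auto simp: Dp_def image_iff lookup_add)
  fix \<beta> assume "\<forall>i. lk \<beta> i \<le> lk \<alpha> i"
  then show "\<beta> + (\<alpha> - \<beta>) = \<alpha>" by (intro poly_mapping_eqI) (simp add: lookup_add lookup_minus)
qed

lemma finite_Dp [simp]: "finite (Dp \<alpha>)"
  unfolding Dp_eq using finite_below by blast

lemma sf_mult_Dp: "sf_mult f g \<alpha> = (\<Sum>(\<beta>, \<gamma>) \<in> Dp \<alpha>. f \<beta> * g \<gamma>)"
  by (simp add: sf_mult_def Dp_def)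

lemma sf_mult_comm: "sf_mult f g = sf_mult g f"
proof (rule ext)
  fix \<alpha>
  have "(\<Sum>(\<beta>, \<gamma>) \<in> Dp \<alpha>. f \<beta> * g \<gamma>) = (\<Sum>(\<beta>, \<gamma>) \<in> Dp \<alpha>. g \<beta> * f \<gamma>)"
    by (rule sum.reindex_bij_witness[of _ prod.swap prod.swap]) (auto simp: Dp_def add.commute)
  then show "sf_mult f g \<alpha> = sf_mult g f \<alpha>" by (simp add: sf_mult_Dp)
qed

lemma sum_Dp_delta: "(\<Sum>(\<beta>, \<gamma>) \<in> Dp \<alpha>. (if \<beta> = 0 then c else 0) * g \<gamma>) = (c::rat) * g \<alpha>"
proof -
  have "(\<Sum>(\<beta>, \<gamma>) \<in> Dp \<alpha>. (if \<beta> = 0 then c else 0) * g \<gamma>)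
      = (\<Sum>x \<in> Dp \<alpha>. if fst x = 0 then c * g (snd x) else 0)"
    by (intro sum.cong) (auto split: if_splits)
  also have "\<dots> = (\<Sum>x \<in> {x \<in> Dp \<alpha>. fst x = 0}. c * g (snd x))"
    by (simp add: sum.inter_filter)
  also have "{x \<in> Dp \<alpha>. fst x = 0} = {(0, \<alpha>)}" by (auto simp: Dp_def)
  finally show ?thesis by simp
qed

lemma sf_mult_one: "sf_mult sf_one g = g"
  using sum_Dp_delta[where c=1 and g=g] by (auto simp: sf_mult_Dp sf_one_def fun_eq_iff)

lemma sf_mult_assoc: "sf_mult (sf_mult f g) h = sf_mult f (sf_mult g h)"
proof (rule ext)
  fix \<alpha>
  have "sf_mult (sf_mult f g) h \<alpha> = (\<Sum>p \<in> Dp \<alpha>. \<Sum>q \<in> Dp (fst p). f (fst q) * g (snd q) * h (snd p))"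
    by (simp add: sf_mult_Dp case_prod_unfold sum_distrib_right)
  also have "\<dots> = (\<Sum>(p,q) \<in> Sigma (Dp \<alpha>) (\<lambda>p. Dp (fst p)). f (fst q) * g (snd q) * h (snd p))"
    by (rule sum.Sigma) auto
  also have "\<dots> = (\<Sum>(p,q) \<in> Sigma (Dp \<alpha>) (\<lambda>p. Dp (snd p)). f (fst p) * (g (fst q) * h (snd q)))"
    by (rule sum.reindex_bij_witness[of _ "\<lambda>((\<beta>,\<gamma>),(\<delta>,\<epsilon>)). ((\<beta>+\<delta>,\<epsilon>),(\<beta>,\<delta>))"
           "\<lambda>((\<gamma>,\<epsilon>),(\<beta>,\<delta>)). ((\<beta>, \<delta>+\<epsilon>), (\<delta>,\<epsilon>))"]) (auto simp: Dp_def add.assoc mult.assoc)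
  also have "\<dots> = (\<Sum>p \<in> Dp \<alpha>. \<Sum>q \<in> Dp (snd p). f (fst p) * (g (fst q) * h (snd q)))"
    by (rule sum.Sigma[symmetric]) auto
  also have "\<dots> = sf_mult f (sf_mult g h) \<alpha>"
    by (simp add: sf_mult_Dp case_prod_unfold sum_distrib_left)
  finally show "sf_mult (sf_mult f g) h \<alpha> = sf_mult f (sf_mult g h) \<alpha>" .
qed

lemma sf_mult_distrib: "sf_mult (\<lambda>\<alpha>. f \<alpha> + g \<alpha>) h = (\<lambda>\<alpha>. sf_mult f h \<alpha> + sf_mult g h \<alpha>)"
  by (simp add: sf_mult_Dp case_prod_unfold distrib_right sum.distrib fun_eq_iff)

typedef ser = "UNIV :: sf set" by auto
setup_lifting type_definition_ser

instantiation ser :: comm_ring_1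
begin
lift_definition zero_ser :: ser is "\<lambda>\<alpha>. 0" .
lift_definition one_ser :: ser is sf_one .
lift_definition plus_ser :: "ser \<Rightarrow> ser \<Rightarrow> ser" is "\<lambda>f g \<alpha>. f \<alpha> + g \<alpha>" .
lift_definition minus_ser :: "ser \<Rightarrow> ser \<Rightarrow> ser" is "\<lambda>f g \<alpha>. f \<alpha> - g \<alpha>" .
lift_definition uminus_ser :: "ser \<Rightarrow> ser" is "\<lambda>f \<alpha>. - f \<alpha>" .
lift_definition times_ser :: "ser \<Rightarrow> ser \<Rightarrow> ser" is sf_mult .
instance
proof
  fix a b c :: ser
  show "a * b * c = a * (b * c)" by transfer (rule sf_mult_assoc)
  show "a * b = b * a" by transfer (rule sf_mult_comm)
  show "1 * a = a" by transfer (rule sf_mult_one)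
  show "(a + b) * c = a * c + b * c" by transfer (rule sf_mult_distrib)
  show "a + b + c = a + (b + c)" by transfer (simp add: add.assoc)
  show "a + b = b + a" by transfer (simp add: add.commute)
  show "0 + a = a" by transfer simp
  show "- a + a = 0" by transfer simp
  show "a - b = a + - b" by transfer simp
  show "(0::ser) \<noteq> 1" by transfer (auto simp: sf_one_def fun_eq_iff)
qed
end


abbreviation coef :: "ser \<Rightarrow> sf" where "coef \<equiv> Rep_ser"

definition sc :: "rat \<Rightarrow> ser" where "sc c = Abs_ser (\<lambda>\<alpha>. if \<alpha> = 0 then c else 0)"

definition P :: "nat \<Rightarrow> ser" where "P r = Abs_ser (psum r)"

lemma coef_Abs [simp]: "coef (Abs_ser f) = f" by (simp add: Abs_ser_inverse)

lemma coef_add [simp]: "coef (f + g) \<alpha> = coef f \<alpha> + coef g \<alpha>" by transfer simp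
lemma coef_diff [simp]: "coef (f - g) \<alpha> = coef f \<alpha> - coef g \<alpha>" by transfer simp
lemma coef_uminus [simp]: "coef (- f) \<alpha> = - coef f \<alpha>" by transfer simp
lemma coef_zero [simp]: "coef 0 \<alpha> = 0" by transfer simp
lemma coef_one: "coef 1 \<alpha> = (if \<alpha> = 0 then 1 else 0)" by transfer (simp add: sf_one_def)
lemma coef_mult: "coef (f * g) \<alpha> = (\<Sum>(\<beta>, \<gamma>) \<in> Dp \<alpha>. coef f \<beta> * coef g \<gamma>)"
  by transfer (simp add: sf_mult_Dp)

lemma coef_sum: "coef (\<Sum>i\<in>A. f i) \<alpha> = (\<Sum>i\<in>A. coef (f i) \<alpha>)"
  by (induction A rule: infinite_finite_induct) auto

lemma ser_eqI: "(\<And>\<alpha>. coef f \<alpha> = coef g \<alpha>) \<Longrightarrow> f = g"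
  by (metis Rep_ser_inject ext)

lemma coef_sc_mult [simp]: "coef (sc c * f) \<alpha> = c * coef f \<alpha>"
proof -
  have "coef (sc c * f) \<alpha> = (\<Sum>(\<beta>, \<gamma>) \<in> Dp \<alpha>. (if \<beta> = 0 then c else 0) * coef f \<gamma>)"
    by (simp add: coef_mult sc_def)
  also have "\<dots> = c * coef f \<alpha>" by (rule sum_Dp_delta)
  finally show ?thesis .
qed

lemma sc_add: "sc (a + b) = sc a + sc b"
  by (rule ser_eqI) (simp add: sc_def)
lemma sc_one: "sc 1 = 1"
  by (rule ser_eqI) (simp add: sc_def coef_one)
lemma sc_zero: "sc 0 = 0"
  by (rule ser_eqI) (simp add: sc_def)
lemma sc_mult: "sc (a * b) = sc a * sc b"
  by (rule ser_eqI) (subst coef_sc_mult, simp add: sc_def)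
lemma sc_uminus: "sc (- a) = - sc a"
  by (rule ser_eqI) (simp add: sc_def)
lemma sc_sum: "sc (\<Sum>i\<in>A. f i) = (\<Sum>i\<in>A. sc (f i))"
  by (induction A rule: infinite_finite_induct) (auto simp: sc_zero sc_add)
lemma sc_sum_list: "sc (sum_list xs) = sum_list (map sc xs)"
  by (induction xs) (auto simp: sc_zero sc_add)

lemma Abs_mult: "Abs_ser (sf_mult f g) = Abs_ser f * Abs_ser g"
  by (simp add: times_ser.abs_eq)
lemma Abs_add: "Abs_ser (sf_add f g) = Abs_ser f + Abs_ser g"
  by (simp add: plus_ser.abs_eq sf_add_def)
lemma Abs_one: "Abs_ser sf_one = 1"
  by (simp add: one_ser.abs_eq)
lemma Abs_zero: "Abs_ser sf_zero = 0"
  by (simp add: zero_ser.abs_eq sf_zero_def)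
lemma Abs_pow: "Abs_ser (sf_pow f k) = Abs_ser f ^ k"
  by (induction k) (simp_all add: Abs_one Abs_mult)
lemma Abs_smult: "Abs_ser (sf_smult c f) = sc c * Abs_ser f"
  by (rule ser_eqI) (simp add: sf_smult_def)
lemma Abs_sum: "Abs_ser (sf_sum g A) = (\<Sum>i\<in>A. Abs_ser (g i))"
  by (rule ser_eqI) (simp add: sf_sum_def coef_sum)
lemma Abs_eq_iff: "Abs_ser f = Abs_ser g \<longleftrightarrow> f = g"
  by (simp add: Abs_ser_inject)

lemma Abs_p_part: "Abs_ser (p_part lam) = prod_list (map P lam)"
  by (induction lam) (simp_all add: p_part_def Abs_one Abs_mult P_def)

lemma Abs_sf_lin: "Abs_ser (sf_lin L) = (\<Sum>(c, lam) \<leftarrow> L. sc c * prod_list (map P lam))"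
proof (induction L)
  case Nil then show ?case by (rule ser_eqI) (simp add: sf_lin_def)
next
  case (Cons x L)
  obtain c lam where x: "x = (c, lam)" by (cases x)
  have "Abs_ser (sf_lin (x # L)) = sc c * Abs_ser (p_part lam) + Abs_ser (sf_lin L)"
    by (rule ser_eqI) (simp add: sf_lin_def x)
  then show ?case using Cons by (simp add: x Abs_p_part)
qed

lemma Abs_monomial: "Abs_ser (sf_monomial ys e) = prod_list (map (\<lambda>(y, k). Abs_ser y ^ k) (zip ys e))"
proof -
  have "\<And>z. Abs_ser (foldr (\<lambda>(y, k) acc. sf_mult (sf_pow y k) acc) z sf_one) = prod_list (map (\<lambda>(y, k). Abs_ser y ^ k) z)"
  proof -
    fix z :: "(sf \<times> nat) list"
    show "Abs_ser (foldr (\<lambda>(y, k) acc. sf_mult (sf_pow y k) acc) z sf_one) = prod_list (map (\<lambda>(y, k). Abs_ser y ^ k) z)"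
      by (induction z) (auto simp: Abs_one Abs_mult Abs_pow)
  qed
  then show ?thesis by (simp add: sf_monomial_def)
qed

lemma coef_P_mult:
  assumes k: "0 < k"
  shows "coef (P k * f) \<alpha> = (\<Sum>c\<in>ks \<alpha>. if k \<le> lk \<alpha> c then coef f (\<alpha> - sng c k) else 0)"
proof -
  let ?T = "{x \<in> Dp \<alpha>. \<exists>i. fst x = sng i k}"
  let ?C = "{c \<in> ks \<alpha>. k \<le> lk \<alpha> c}"
  have "coef (P k * f) \<alpha> = (\<Sum>x \<in> Dp \<alpha>. if \<exists>i. fst x = sng i k then coef f (snd x) else 0)"
    by (simp add: coef_mult P_def psum_def case_prod_unfold) (intro sum.cong, auto)
  also have "\<dots> = (\<Sum>x \<in> ?T. coef f (snd x))" by (simp add: sum.inter_filter)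
  also have "?T = (\<lambda>c. (sng c k, \<alpha> - sng c k)) ` ?C"
  proof (rule set_eqI, rule iffI)
    fix x assume "x \<in> ?T"
    then obtain i \<gamma> where x: "x = (sng i k, \<gamma>)" and e: "sng i k + \<gamma> = \<alpha>" by (auto simp: Dp_def)
    have l: "lk \<alpha> i = k + lk \<gamma> i" using e by (metis lookup_add lookup_single_eq)
    have "\<gamma> = \<alpha> - sng i k" using e by (metis add_diff_cancel_left')
    moreover have "i \<in> ?C" using l k by (auto simp: in_keys_iff)
    ultimately show "x \<in> (\<lambda>c. (sng c k, \<alpha> - sng c k)) ` ?C" using x by auto
  next
    fix x assume "x \<in> (\<lambda>c. (sng c k, \<alpha> - sng c k)) ` ?C"
    then obtain c where x: "x = (sng c k, \<alpha> - sng c k)" and c: "k \<le> lk \<alpha> c" by auto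
    have "sng c k + (\<alpha> - sng c k) = \<alpha>"
      by (rule poly_mapping_eqI) (use c in \<open>auto simp: lookup_add lookup_minus lookup_single when_def\<close>)
    then show "x \<in> ?T" using x by (auto simp: Dp_def)
  qed
  also have "(\<Sum>x \<in> (\<lambda>c. (sng c k, \<alpha> - sng c k)) ` ?C. coef f (snd x)) = (\<Sum>c \<in> ?C. coef f (\<alpha> - sng c k))"
  proof (rule sum.reindex_cong[where l="\<lambda>c. (sng c k, \<alpha> - sng c k)"])
    show "inj_on (\<lambda>c. (sng c k, \<alpha> - sng c k)) ?C"
      by (rule inj_onI) (metis k Pair_inject lookup_single_eq lookup_single_not_eq less_numeral_extra(3))
  qed auto
  also have "\<dots> = (\<Sum>c\<in>ks \<alpha>. if k \<le> lk \<alpha> c then coef f (\<alpha> - sng c k) else 0)"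
    by (simp add: sum.inter_filter)
  finally show ?thesis .
qed

lemma coef_mult_nonneg:
  "(\<And>\<beta>. coef f \<beta> \<ge> 0) \<Longrightarrow> (\<And>\<beta>. coef g \<beta> \<ge> 0) \<Longrightarrow> coef (f * g) \<alpha> \<ge> 0"
  by (simp add: coef_mult case_prod_unfold sum_nonneg)

lemma coef_P_nonneg: "coef (P k) \<beta> \<ge> 0"
  by (simp add: P_def psum_def)

lemma coef_prod_P_nonneg: "coef (prod_list (map P lam)) \<beta> \<ge> 0"
  by (induction lam arbitrary: \<beta>) (auto simp: coef_one intro!: coef_mult_nonneg coef_P_nonneg)

definition wsum :: "nat list \<Rightarrow> nat list \<Rightarrow> (nat \<Rightarrow>\<^sub>0 nat)" where
  "wsum cs lam = (\<Sum>j<length lam. sng (cs ! j) (lam ! j))"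

lemma lk_wsum: "lk (wsum cs lam) x = (\<Sum>j<length lam. if cs ! j = x then lam ! j else 0)"
  by (simp add: wsum_def lookup_sum lookup_single when_def)

lemma wsum_Cons: "wsum (c # cs) (r # lam) = sng c r + wsum cs lam"
  unfolding wsum_def length_Cons sum.lessThan_Suc_shift by simp

lemma coef_prod_P_ne0:
  assumes "\<forall>r\<in>set lam. 0 < r"
  shows "coef (prod_list (map P lam)) \<alpha> \<noteq> 0 \<longleftrightarrow> (\<exists>cs. length cs = length lam \<and> \<alpha> = wsum cs lam)"
  using assms
proof (induction lam arbitrary: \<alpha>)
  case Nil
  then show ?case by (simp add: coef_one wsum_def)
next
  case (Cons r lam)
  have r: "0 < r" using Cons.prems by simp
  have IH: "\<And>\<alpha>. coef (prod_list (map P lam)) \<alpha> \<noteq> 0 \<longleftrightarrow> (\<exists>cs. length cs = length lam \<and> \<alpha> = wsum cs lam)"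
    using Cons by simp
  have "coef (prod_list (map P (r # lam))) \<alpha>
      = (\<Sum>c\<in>ks \<alpha>. if r \<le> lk \<alpha> c then coef (prod_list (map P lam)) (\<alpha> - sng c r) else 0)"
    by (simp add: coef_P_mult[OF r])
  also have "\<dots> \<noteq> 0 \<longleftrightarrow> (\<exists>c\<in>ks \<alpha>. r \<le> lk \<alpha> c \<and> coef (prod_list (map P lam)) (\<alpha> - sng c r) \<noteq> 0)"
    by (subst sum_nonneg_eq_0_iff) (auto simp: coef_prod_P_nonneg)
  also have "\<dots> \<longleftrightarrow> (\<exists>cs. length cs = length (r # lam) \<and> \<alpha> = wsum cs (r # lam))"
  proof
    assume "\<exists>c\<in>ks \<alpha>. r \<le> lk \<alpha> c \<and> coef (prod_list (map P lam)) (\<alpha> - sng c r) \<noteq> 0"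
    then obtain c cs where c: "r \<le> lk \<alpha> c" and cs: "length cs = length lam" "\<alpha> - sng c r = wsum cs lam"
      using IH by blast
    have "\<alpha> = sng c r + (\<alpha> - sng c r)"
      by (rule poly_mapping_eqI) (use c in \<open>auto simp: lookup_add lookup_minus lookup_single when_def\<close>)
    then have "\<alpha> = wsum (c # cs) (r # lam)" using cs by (simp add: wsum_Cons)
    then show "\<exists>cs. length cs = length (r # lam) \<and> \<alpha> = wsum cs (r # lam)" using cs
      by (metis length_Cons)
  next
    assume "\<exists>cs. length cs = length (r # lam) \<and> \<alpha> = wsum cs (r # lam)"
    then obtain c cs where cs: "length cs = length lam" "\<alpha> = sng c r + wsum cs lam"
      by (metis length_Suc_conv wsum_Cons)
    have l: "r \<le> lk \<alpha> c" using cs by (simp add: lookup_add)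
    then have "c \<in> ks \<alpha>" using r by (auto simp: in_keys_iff)
    moreover have "\<alpha> - sng c r = wsum cs lam" using cs by simp
    ultimately show "\<exists>c\<in>ks \<alpha>. r \<le> lk \<alpha> c \<and> coef (prod_list (map P lam)) (\<alpha> - sng c r) \<noteq> 0"
      using l IH cs by blast
  qed
  finally show ?case .
qed


definition pm :: "nat multiset \<Rightarrow> ser" where "pm m = prod_mset (image_mset P m)"

lemma pm_mset: "pm (mset lam) = prod_list (map P lam)"
  by (simp add: pm_def prod_mset_prod_list[symmetric] mset_map)

lemma pm_plus: "pm (a + b) = pm a * pm b" by (simp add: pm_def)
lemma pm_single: "pm {#k#} = P k" by (simp add: pm_def)
lemma pm_empty: "pm {#} = 1" by (simp add: pm_def)
lemma pm_replicate: "pm (replicate_mset n k) = P k ^ n" by (simp add: pm_def)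

lemma wsum_upt: "lk (wsum [0..<length l] l) i = (if i < length l then l ! i else 0)"
proof -
  have "lk (wsum [0..<length l] l) i = (\<Sum>j<length l. if j = i then l ! j else 0)"
    by (simp add: lk_wsum)
  also have "\<dots> = (if i < length l then l ! i else 0)"
    by (simp add: sum.delta' lessThan_iff)
  finally show ?thesis .
qed


lemma keys_wsum_subset: "length cs = length lam \<Longrightarrow> ks (wsum cs lam) \<subseteq> set cs"
proof
  fix x assume len: "length cs = length lam" and "x \<in> ks (wsum cs lam)"
  then have "(\<Sum>j<length lam. if cs ! j = x then lam ! j else 0) \<noteq> 0"
    by (simp add: in_keys_iff lk_wsum)
  then obtain j where "j < length lam" "cs ! j = x"
    by (auto dest!: sum.not_neutral_contains_not_neutral split: if_splits)
  then show "x \<in> set cs" using len by (metis nth_mem)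
qed

lemma lk_wsum_distinct:
  assumes "distinct cs" "length cs = length lam" "j < length lam"
  shows "lk (wsum cs lam) (cs ! j) = lam ! j"
proof -
  have "lk (wsum cs lam) (cs ! j) = (\<Sum>j'<length lam. if j' = j then lam ! j' else 0)"
    unfolding lk_wsum using assms by (intro sum.cong) (auto simp: nth_eq_iff_index_eq)
  then show ?thesis using assms(3) by (simp add: sum.delta')
qed

lemma match_lemma:
  assumes pos: "\<forall>r\<in>set l0. 0 < r"
    and len: "length cs = length lam" and le: "length lam \<le> length l0"
    and eq: "wsum [0..<length l0] l0 = wsum cs lam"
  shows "mset lam = mset l0"
proof -
  let ?L = "length l0"
  let ?a = "wsum [0..<?L] l0"
  have keys: "ks ?a = {0..<?L}"
  proof (rule set_eqI)
    fix i show "i \<in> ks ?a \<longleftrightarrow> i \<in> {0..<?L}"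
      using pos by (auto simp: in_keys_iff wsum_upt)
  qed
  have sub: "{0..<?L} \<subseteq> set cs" using keys_wsum_subset[OF len] keys eq by auto
  have c0: "?L \<le> card (set cs)"
    using card_mono[OF finite_set sub] by simp
  have c1: "?L \<le> card (set cs)" "card (set cs) \<le> length cs" using c0 card_length by auto
  have "card (set cs) = length cs" using c1 len le by linarith
  then have dist: "distinct cs" by (rule card_distinct)
  have "card (set cs) = ?L" using c1 len le by linarith
  then have "{0..<?L} = set cs" using card_subset_eq[OF finite_set sub] by simp
  then have setcs: "set cs = {0..<?L}" by simp
  have lam_eq: "lam = map (\<lambda>c. l0 ! c) cs"
  proof (rule nth_equalityI)
    show "length lam = length (map (\<lambda>c. l0 ! c) cs)" using len by simp
    fix j assume j: "j < length lam"
    have "cs ! j < ?L" using setcs j len by (metis atLeastLessThan_iff nth_mem)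
    then have "lam ! j = l0 ! (cs ! j)"
      using lk_wsum_distinct[OF dist len j] eq[symmetric] wsum_upt[of l0 "cs ! j"] by simp
    then show "lam ! j = map (\<lambda>c. l0 ! c) cs ! j" using j len by simp
  qed
  have "mset cs = mset [0..<?L]"
    using dist setcs by (metis distinct_upt set_eq_iff_mset_eq_distinct set_upt)
  then have "mset lam = image_mset (\<lambda>c. l0 ! c) (mset [0..<?L])"
    by (simp add: lam_eq mset_map)
  also have "\<dots> = mset (map (\<lambda>c. l0 ! c) [0..<?L])" by (simp add: mset_map)
  also have "map (\<lambda>c. l0 ! c) [0..<?L] = l0" by (simp add: map_nth)
  finally show ?thesis .
qed

lemma lin_indep:
  assumes fin: "finite S" and pos: "\<forall>m\<in>S. 0 \<notin># m"
    and z: "(\<Sum>m\<in>S. sc (a m) * pm m) = 0"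
  shows "\<forall>m\<in>S. a m = 0"
proof (rule ccontr)
  assume "\<not> (\<forall>m\<in>S. a m = 0)"
  let ?S' = "{m\<in>S. a m \<noteq> 0}"
  have ne: "?S' \<noteq> {}" "finite ?S'" using \<open>\<not> _\<close> fin by auto
  obtain m0 where m0: "m0 \<in> ?S'" and mx: "\<forall>m\<in>?S'. size m \<le> size m0"
  proof -
    have "Max (size ` ?S') \<in> size ` ?S'" using ne by (intro Max_in) auto
    then obtain m0 where "m0 \<in> ?S'" "size m0 = Max (size ` ?S')" by auto
    moreover have "\<forall>m\<in>?S'. size m \<le> Max (size ` ?S')" using ne by auto
    ultimately show ?thesis using that by auto
  qed
  define l0 where "l0 = sorted_list_of_multiset m0"
  have ml0: "mset l0 = m0" by (simp add: l0_def)
  have pos0: "\<forall>r\<in>set l0. 0 < r" using pos m0 ml0 by (auto intro!: gr0I)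
  define \<alpha> where "\<alpha> = wsum [0..<length l0] l0"
  have other: "coef (pm m) \<alpha> = 0" if m: "m \<in> ?S'" "m \<noteq> m0" for m
  proof (rule ccontr)
    assume ne0: "coef (pm m) \<alpha> \<noteq> 0"
    define lam where "lam = sorted_list_of_multiset m"
    have ml: "mset lam = m" by (simp add: lam_def)
    have posl: "\<forall>r\<in>set lam. 0 < r" using pos m ml by (auto intro!: gr0I)
    obtain cs where cs: "length cs = length lam" "\<alpha> = wsum cs lam"
      using ne0 coef_prod_P_ne0[OF posl] by (metis ml pm_mset)
    have "length lam \<le> length l0" using mx m ml ml0 by (metis size_mset)
    then have "mset lam = mset l0" using match_lemma[OF pos0 cs(1)] cs(2) \<alpha>_def by simp
    then show False using ml ml0 m by simp
  qed
  have self: "coef (pm m0) \<alpha> \<noteq> 0"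
    using coef_prod_P_ne0[OF pos0, of \<alpha>] \<alpha>_def ml0 pm_mset by (metis length_upt minus_nat.diff_0)
  have "coef (\<Sum>m\<in>S. sc (a m) * pm m) \<alpha> = (\<Sum>m\<in>S. a m * coef (pm m) \<alpha>)"
    by (simp add: coef_sum)
  also have "\<dots> = (\<Sum>m\<in>{m0}. a m * coef (pm m) \<alpha>)"
    using m0 other fin by (intro sum.mono_neutral_right) auto
  also have "\<dots> \<noteq> 0" using self m0 by simp
  finally show False using z by simp
qed


definition lin2 :: "(rat \<times> nat multiset) list \<Rightarrow> ser" where
  "lin2 L = sum_list (map (\<lambda>(a, m). sc a * pm m) L)"

definition G :: "(rat \<times> nat multiset) list \<Rightarrow> nat multiset \<Rightarrow> rat" where
  "G L m = sum_list (map (\<lambda>(a, m'). if m' = m then a else 0) L)"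

lemma lin2_Cons: "lin2 ((a, m) # L) = sc a * pm m + lin2 L" by (simp add: lin2_def)
lemma G_Cons: "G ((a, m') # L) m = (if m' = m then a else 0) + G L m" by (simp add: G_def)

lemma lin2_group:
  assumes "finite S" "set (map snd L) \<subseteq> S"
  shows "lin2 L = (\<Sum>m\<in>S. sc (G L m) * pm m)"
  using assms(2)
proof (induction L)
  case Nil then show ?case by (simp add: lin2_def G_def sc_zero)
next
  case (Cons x L)
  obtain a m0 where x: "x = (a, m0)" by (cases x)
  have m0: "m0 \<in> S" using Cons.prems x by simp
  have "lin2 (x # L) = sc a * pm m0 + (\<Sum>m\<in>S. sc (G L m) * pm m)"
    using Cons by (simp add: x lin2_Cons)
  also have "sc a * pm m0 = (\<Sum>m\<in>S. sc (if m0 = m then a else 0) * pm m)"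
  proof -
    have "(\<Sum>m\<in>S. sc (if m0 = m then a else 0) * pm m) = (\<Sum>m\<in>S. if m0 = m then sc a * pm m else 0)"
      by (intro sum.cong) (auto simp: sc_zero)
    also have "\<dots> = sc a * pm m0" using m0 assms(1) by (simp add: sum.delta)
    finally show ?thesis by simp
  qed
  also have "\<dots> + (\<Sum>m\<in>S. sc (G L m) * pm m) = (\<Sum>m\<in>S. sc (G (x # L) m) * pm m)"
    by (simp add: x G_Cons sc_add distrib_right sum.distrib)
  finally show ?case .
qed

lemma G_notin: "m \<notin> set (map snd L) \<Longrightarrow> G L m = 0"
  by (induction L) (auto simp: G_def)

definition posL :: "(rat \<times> nat multiset) list \<Rightarrow> bool" where
  "posL L \<longleftrightarrow> (\<forall>x\<in>set L. 0 \<notin># snd x)"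

lemma lin2_zero:
  assumes "posL L" "lin2 L = 0"
  shows "G L m = 0"
proof (cases "m \<in> set (map snd L)")
  case True
  have "(\<Sum>m\<in>set (map snd L). sc (G L m) * pm m) = 0"
    using assms lin2_group[of "set (map snd L)" L] by simp
  then show ?thesis using lin_indep[of "set (map snd L)"] assms(1) True
    by (auto simp: posL_def)
next
  case False then show ?thesis by (rule G_notin)
qed

definition negL :: "(rat \<times> nat multiset) list \<Rightarrow> (rat \<times> nat multiset) list" where
  "negL L = map (\<lambda>(a, m). (- a, m)) L"

lemma lin2_append: "lin2 (L1 @ L2) = lin2 L1 + lin2 L2" by (simp add: lin2_def)
lemma lin2_negL: "lin2 (negL L) = - lin2 L"
  by (induction L) (auto simp: lin2_def negL_def sc_uminus)
lemma G_append: "G (L1 @ L2) m = G L1 m + G L2 m" by (simp add: G_def)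
lemma G_negL: "G (negL L) m = - G L m"
  by (induction L) (auto simp: G_def negL_def)

lemma lin2_eq:
  assumes "posL L1" "posL L2" "lin2 L1 = lin2 L2"
  shows "G L1 m = G L2 m"
proof -
  have "posL (L1 @ negL L2)" using assms by (auto simp: posL_def negL_def)
  moreover have "lin2 (L1 @ negL L2) = 0" using assms by (simp add: lin2_append lin2_negL)
  ultimately have "G (L1 @ negL L2) m = 0" by (rule lin2_zero)
  then show ?thesis by (simp add: G_append G_negL)
qed

lemma lin2_cong_G:
  assumes "\<And>m. G L1 m = G L2 m"
  shows "lin2 L1 = lin2 L2"
proof -
  let ?S = "set (map snd L1) \<union> set (map snd L2)"
  have "lin2 L1 = (\<Sum>m\<in>?S. sc (G L1 m) * pm m)" by (rule lin2_group) auto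
  also have "\<dots> = (\<Sum>m\<in>?S. sc (G L2 m) * pm m)" using assms by simp
  also have "\<dots> = lin2 L2" by (rule lin2_group[symmetric]) auto
  finally show ?thesis .
qed

definition conv :: "(rat \<times> nat list) list \<Rightarrow> (rat \<times> nat multiset) list" where
  "conv L = map (\<lambda>(c, lam). (c, mset lam)) L"

definition osg :: "nat multiset \<Rightarrow> rat" where
  "osg m = prod_mset (image_mset (\<lambda>r. (-1) ^ (r - 1)) m)"

definition omL :: "(rat \<times> nat multiset) list \<Rightarrow> (rat \<times> nat multiset) list" where
  "omL L = map (\<lambda>(a, m). (osg m * a, m)) L"

lemma Abs_sf_lin_conv: "Abs_ser (sf_lin L) = lin2 (conv L)"
  by (simp add: Abs_sf_lin lin2_def conv_def case_prod_unfold pm_mset o_def)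

lemma omega_sign_osg: "omega_sign lam = osg (mset lam)"
  by (simp add: omega_sign_def osg_def prod_mset_prod_list[symmetric] mset_map)

lemma conv_omega: "conv (map (\<lambda>(c, lam). (omega_sign lam * c, lam)) L) = omL (conv L)"
  by (simp add: conv_def omL_def case_prod_unfold omega_sign_osg)

lemma G_omL: "G (omL L) m = osg m * G L m"
  by (induction L) (auto simp: G_def omL_def distrib_left)

lemma posL_conv: "valid_plin L \<Longrightarrow> posL (conv L)"
  unfolding valid_plin_def posL_def conv_def by (force simp: case_prod_unfold)

lemma Abs_omega:
  assumes "valid_plin L"
  shows "Abs_ser (sf_omega (sf_lin L)) = lin2 (omL (conv L))"
proof -
  define L' where "L' = (SOME L'. valid_plin L' \<and> sf_lin L = sf_lin L')"
  have "valid_plin L' \<and> sf_lin L = sf_lin L'"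
    unfolding L'_def by (rule someI[of _ L]) (use assms in simp)
  then have v: "valid_plin L'" and e: "sf_lin L = sf_lin L'" by auto
  have "lin2 (conv L) = lin2 (conv L')" using e by (metis Abs_sf_lin_conv)
  then have g: "\<And>m. G (conv L) m = G (conv L') m"
    using lin2_eq posL_conv assms v by blast
  have "Abs_ser (sf_omega (sf_lin L)) = lin2 (omL (conv L'))"
    by (simp add: sf_omega_def L'_def[symmetric] Abs_sf_lin_conv conv_omega)
  also have "\<dots> = lin2 (omL (conv L))"
    by (rule lin2_cong_G) (simp add: G_omL g)
  finally show ?thesis .
qed

lemma Abs_near:
  assumes "valid_plin L" "chromatic_sf V E = sf_lin L"
  shows "Abs_ser (near_chromatic_sf V E) = sc (1/2) * (lin2 (conv L) + lin2 (omL (conv L)))"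
  by (simp add: near_chromatic_sf_def Abs_smult Abs_add assms Abs_omega Abs_sf_lin_conv)

lemma lin2_half:
  "sc (1/2) * (lin2 L + lin2 (omL L)) = lin2 (map (\<lambda>(a, m). ((1 + osg m) / 2 * a, m)) L)"
proof (induction L)
  case Nil then show ?case by (simp add: lin2_def omL_def)
next
  case (Cons x L)
  obtain a m where x: "x = (a, m)" by (cases x)
  have "sc (1/2) * (lin2 (x # L) + lin2 (omL (x # L)))
     = sc (1/2) * (sc a * pm m + sc (osg m * a) * pm m) + sc (1/2) * (lin2 L + lin2 (omL L))"
    by (simp add: x lin2_Cons omL_def algebra_simps)
  also have "sc (1/2) * (sc a * pm m + sc (osg m * a) * pm m) = sc ((1 + osg m) / 2 * a) * pm m"
    apply (rule ser_eqI) apply (simp only: coef_sc_mult coef_add) by (simp add: algebra_simps)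
  finally show ?case using Cons by (simp add: x lin2_Cons)
qed


definition cont :: "'a set \<Rightarrow> ('a \<Rightarrow> nat) \<Rightarrow> (nat \<Rightarrow>\<^sub>0 nat) \<Rightarrow> bool" where
  "cont V \<kappa> \<alpha> \<longleftrightarrow> (\<forall>i. card {v \<in> V. \<kappa> v = i} = lk \<alpha> i)"

lemma chromatic_cont: "chromatic_sf V E \<alpha> = of_nat (card {\<kappa> \<in> V \<rightarrow>\<^sub>E UNIV. proper_colouring V E \<kappa> \<and> cont V \<kappa> \<alpha>})"
  by (simp add: chromatic_sf_def cont_def)

lemma split_card:
  assumes A: "finite A" "a \<notin> A" and C: "finite C" "\<And>c \<kappa>. \<Phi> c \<kappa> \<Longrightarrow> c \<in> C"
    and fin: "\<And>c. c \<in> C \<Longrightarrow> finite {\<kappa> \<in> A \<rightarrow>\<^sub>E UNIV. \<Phi> c \<kappa>}"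
  shows "card {\<kappa> \<in> insert a A \<rightarrow>\<^sub>E UNIV. \<Phi> (\<kappa> a) (restrict \<kappa> A)}
       = (\<Sum>c\<in>C. card {\<kappa> \<in> A \<rightarrow>\<^sub>E UNIV. \<Phi> c \<kappa>})"
proof -
  let ?L = "{\<kappa> \<in> insert a A \<rightarrow>\<^sub>E UNIV. \<Phi> (\<kappa> a) (restrict \<kappa> A)}"
  let ?R = "SIGMA c:C. {\<kappa> \<in> A \<rightarrow>\<^sub>E UNIV. \<Phi> c \<kappa>}"
  define f where "f = (\<lambda>\<kappa>::'a \<Rightarrow> 'b. (\<kappa> a, restrict \<kappa> A))"
  define g where "g = (\<lambda>y::'b \<times> ('a \<Rightarrow> 'b). (snd y)(a := fst y))"
  have "bij_betw f ?L ?R"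
  proof (rule bij_betwI[where g=g])
    show "f \<in> ?L \<rightarrow> ?R" using C(2) by (auto simp: f_def)
    show "g \<in> ?R \<rightarrow> ?L"
    proof
      fix y assume y: "y \<in> ?R"
      obtain c \<kappa> where yy: "y = (c, \<kappa>)" by (cases y)
      have k: "\<kappa> \<in> A \<rightarrow>\<^sub>E UNIV" "\<Phi> c \<kappa>" using y yy by auto
      have "restrict (\<kappa>(a := c)) A = \<kappa>"
        using k A(2) by (auto simp: PiE_def extensional_def restrict_def fun_eq_iff)
      moreover have "\<kappa>(a := c) \<in> insert a A \<rightarrow>\<^sub>E UNIV" using k by (auto simp: PiE_def extensional_def)
      ultimately show "g y \<in> ?L" using k by (auto simp: g_def yy)
    qed
    fix x assume x: "x \<in> ?L"
    show "g (f x) = x"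
    proof (rule ext)
      fix v show "g (f x) v = x v"
        using x by (auto simp: PiE_def extensional_def f_def g_def)
    qed
  next
    fix y assume y: "y \<in> ?R"
    obtain c \<kappa> where yy: "y = (c, \<kappa>)" by (cases y)
    have "restrict (\<kappa>(a := c)) A = \<kappa>"
      using y yy A(2) by (auto simp: PiE_def extensional_def restrict_def fun_eq_iff)
    then show "f (g y) = y" by (simp add: yy f_def g_def)
  qed
  then have "card ?L = card ?R" by (rule bij_betw_same_card)
  also have "\<dots> = (\<Sum>c\<in>C. card {\<kappa> \<in> A \<rightarrow>\<^sub>E UNIV. \<Phi> c \<kappa>})" using C fin by simp
  finally show ?thesis .
qed

lemma card_insert_colour:
  assumes "a \<notin> A" "finite A"
  shows "card {v \<in> insert a A. \<kappa> v = i} = card {v \<in> A. restrict \<kappa> A v = i} + (if \<kappa> a = i then 1 else 0)"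
proof -
  have e: "{v \<in> A. restrict \<kappa> A v = i} = {v \<in> A. \<kappa> v = i}" by auto
  show ?thesis
  proof (cases "\<kappa> a = i")
    case True
    then have "{v \<in> insert a A. \<kappa> v = i} = insert a {v \<in> A. \<kappa> v = i}" by auto
    then show ?thesis using assms True e by simp
  next
    case False
    then have "{v \<in> insert a A. \<kappa> v = i} = {v \<in> A. \<kappa> v = i}" by auto
    then show ?thesis using False e by simp
  qed
qed

lemma cont_insert:
  assumes "a \<notin> A" "finite A"
  shows "cont (insert a A) \<kappa> \<alpha> \<longleftrightarrow> 1 \<le> lk \<alpha> (\<kappa> a) \<and> cont A (restrict \<kappa> A) (\<alpha> - sng (\<kappa> a) 1)"
  unfolding cont_def card_insert_colour[OF assms]
  by (auto simp: lookup_minus lookup_single when_def)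

lemma finite_cont: "finite {\<kappa> \<in> A \<rightarrow>\<^sub>E UNIV. Q \<kappa> \<and> cont A \<kappa> \<beta>}" if "finite A" for A :: "'a set"
proof (rule finite_subset)
  show "{\<kappa> \<in> A \<rightarrow>\<^sub>E UNIV. Q \<kappa> \<and> cont A \<kappa> \<beta>} \<subseteq> A \<rightarrow>\<^sub>E ks \<beta>"
  proof
    fix \<kappa> assume k: "\<kappa> \<in> {\<kappa> \<in> A \<rightarrow>\<^sub>E UNIV. Q \<kappa> \<and> cont A \<kappa> \<beta>}"
    have "\<kappa> v \<in> ks \<beta>" if v: "v \<in> A" for v
    proof -
      have "card {w \<in> A. \<kappa> w = \<kappa> v} \<noteq> 0" using v that \<open>finite A\<close> by auto
      then show ?thesis using k by (auto simp: cont_def in_keys_iff)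
    qed
    then show "\<kappa> \<in> A \<rightarrow>\<^sub>E ks \<beta>" using k by (auto simp: PiE_def)
  qed
  show "finite (A \<rightarrow>\<^sub>E ks \<beta>)" using that by (intro finite_PiE) auto
qed

definition Kop :: "sf \<Rightarrow> sf" where
  "Kop f \<alpha> = (\<Sum>c\<in>ks \<alpha>. if lk \<alpha> c = 1 then f (\<alpha> - sng c 1) else 0)"

lemma proper_insert:
  assumes "a \<notin> A" "\<not> E a a" "\<forall>v\<in>A. E a v \<and> E v a"
  shows "proper_colouring (insert a A) E \<kappa> \<longleftrightarrow> proper_colouring A E (restrict \<kappa> A) \<and> (\<forall>v\<in>A. restrict \<kappa> A v \<noteq> \<kappa> a)"
  using assms unfolding proper_colouring_def by auto

lemma cone:
  assumes A: "finite A" "a \<notin> A" and E: "\<not> E a a" "\<forall>v\<in>A. E a v \<and> E v a"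
  shows "chromatic_sf (insert a A) E = Kop (chromatic_sf A E)"
proof (rule ext)
  fix \<alpha>
  let ?\<Phi> = "\<lambda>c \<kappa>. proper_colouring A E \<kappa> \<and> (\<forall>v\<in>A. \<kappa> v \<noteq> c) \<and> 1 \<le> lk \<alpha> c \<and> cont A \<kappa> (\<alpha> - sng c 1)"
  have "{\<kappa> \<in> insert a A \<rightarrow>\<^sub>E UNIV. proper_colouring (insert a A) E \<kappa> \<and> cont (insert a A) \<kappa> \<alpha>}
      = {\<kappa> \<in> insert a A \<rightarrow>\<^sub>E UNIV. ?\<Phi> (\<kappa> a) (restrict \<kappa> A)}"
    using proper_insert[OF A(2) E] cont_insert[OF A(2,1)] by auto
  moreover have "card {\<kappa> \<in> insert a A \<rightarrow>\<^sub>E UNIV. ?\<Phi> (\<kappa> a) (restrict \<kappa> A)} = (\<Sum>c\<in>ks \<alpha>. card {\<kappa> \<in> A \<rightarrow>\<^sub>E UNIV. ?\<Phi> c \<kappa>})"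
    apply (rule split_card[OF A])
      apply simp
     apply (auto simp: in_keys_iff)[1]
    apply (rule finite_subset[OF _ finite_cont[OF A(1), of "\<lambda>_. True" "\<alpha> - sng _ 1"]])
    by auto
  ultimately have "chromatic_sf (insert a A) E \<alpha> = of_nat (\<Sum>c\<in>ks \<alpha>. card {\<kappa> \<in> A \<rightarrow>\<^sub>E UNIV. ?\<Phi> c \<kappa>})"
    unfolding chromatic_cont by simp
  also have "\<dots> = (\<Sum>c\<in>ks \<alpha>. of_nat (card {\<kappa> \<in> A \<rightarrow>\<^sub>E UNIV. ?\<Phi> c \<kappa>}))" by simp
  also have "\<dots> = Kop (chromatic_sf A E) \<alpha>"
    unfolding Kop_def
  proof (rule sum.cong)
    fix c assume c: "c \<in> ks \<alpha>"
    show "of_nat (card {\<kappa> \<in> A \<rightarrow>\<^sub>E UNIV. ?\<Phi> c \<kappa>}) = (if lk \<alpha> c = 1 then chromatic_sf A E (\<alpha> - sng c 1) else 0)"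
    proof (cases "lk \<alpha> c = 1")
      case True
      have "{\<kappa> \<in> A \<rightarrow>\<^sub>E UNIV. ?\<Phi> c \<kappa>} = {\<kappa> \<in> A \<rightarrow>\<^sub>E UNIV. proper_colouring A E \<kappa> \<and> cont A \<kappa> (\<alpha> - sng c 1)}"
      proof -
        have nc: "\<forall>v\<in>A. \<kappa> v \<noteq> c" if k: "cont A \<kappa> (\<alpha> - sng c 1)" for \<kappa>
        proof -
          have "card {w \<in> A. \<kappa> w = c} = 0" using k True by (simp add: cont_def lookup_minus)
          then have "{w \<in> A. \<kappa> w = c} = {}" using A(1) by simp
          then show ?thesis by auto
        qed
        show ?thesis using nc True by auto
      qed
      then show ?thesis using True by (simp add: chromatic_cont)
    next
      case False
      have "{\<kappa> \<in> A \<rightarrow>\<^sub>E UNIV. ?\<Phi> c \<kappa>} = {}"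
      proof -
        have no: "False" if k: "\<forall>v\<in>A. \<kappa> v \<noteq> c" "1 \<le> lk \<alpha> c" "cont A \<kappa> (\<alpha> - sng c 1)" for \<kappa>
        proof -
          have "card {w \<in> A. \<kappa> w = c} = lk \<alpha> c - 1" using k by (simp add: cont_def lookup_minus)
          moreover have "{w \<in> A. \<kappa> w = c} = {}" using k by auto
          ultimately show False using False k by simp
        qed
        show ?thesis using no by blast
      qed
      then show ?thesis using False by (simp only: card.empty of_nat_0 if_False)
    qed
  qed simp
  finally show "chromatic_sf (insert a A) E \<alpha> = Kop (chromatic_sf A E) \<alpha>" .
qed

lemma indep_set:
  assumes "finite A" "\<forall>u\<in>A. \<forall>v\<in>A. \<not> E u v"
  shows "chromatic_sf A E = coef (P 1 ^ card A)"
  using assms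
proof (induction A rule: finite_induct)
  case empty
  show ?case
  proof (rule ext)
    fix \<alpha>
    have "{\<kappa> \<in> {} \<rightarrow>\<^sub>E UNIV. proper_colouring {} E \<kappa> \<and> cont {} \<kappa> \<alpha>} = (if \<alpha> = 0 then {\<lambda>_. undefined} else {})"
    proof (cases "\<alpha> = 0")
      case True then show ?thesis by (auto simp: cont_def proper_colouring_def)
    next
      case False
      then obtain i where "lk \<alpha> i \<noteq> 0" by (metis lookup_zero poly_mapping_eqI)
      then show ?thesis using False by (auto simp: cont_def)
    qed
    then show "chromatic_sf {} E \<alpha> = coef (P 1 ^ card {}) \<alpha>"
      by (simp add: chromatic_cont coef_one)
  qed
next
  case (insert a A)
  have IH: "chromatic_sf A E = coef (P 1 ^ card A)" using insert by simp
  show ?case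
  proof (rule ext)
    fix \<alpha>
    let ?\<Phi> = "\<lambda>c \<kappa>. 1 \<le> lk \<alpha> c \<and> cont A \<kappa> (\<alpha> - sng c 1)"
    have pr: "proper_colouring B E \<kappa>" if "B \<subseteq> insert a A" for B \<kappa>
      using insert.prems that unfolding proper_colouring_def by blast
    have "{\<kappa> \<in> insert a A \<rightarrow>\<^sub>E UNIV. proper_colouring (insert a A) E \<kappa> \<and> cont (insert a A) \<kappa> \<alpha>}
        = {\<kappa> \<in> insert a A \<rightarrow>\<^sub>E UNIV. ?\<Phi> (\<kappa> a) (restrict \<kappa> A)}"
      using cont_insert[OF insert(2,1)] pr by auto
    moreover have "card {\<kappa> \<in> insert a A \<rightarrow>\<^sub>E UNIV. ?\<Phi> (\<kappa> a) (restrict \<kappa> A)} = (\<Sum>c\<in>ks \<alpha>. card {\<kappa> \<in> A \<rightarrow>\<^sub>E UNIV. ?\<Phi> c \<kappa>})"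
      apply (rule split_card[OF insert(1,2)])
        apply simp
       apply (auto simp: in_keys_iff)[1]
      apply (rule finite_subset[OF _ finite_cont[OF insert(1), of "\<lambda>_. True" "\<alpha> - sng _ 1"]])
      by auto
    ultimately have "chromatic_sf (insert a A) E \<alpha> = of_nat (\<Sum>c\<in>ks \<alpha>. card {\<kappa> \<in> A \<rightarrow>\<^sub>E UNIV. ?\<Phi> c \<kappa>})"
      unfolding chromatic_cont by simp
    also have "\<dots> = (\<Sum>c\<in>ks \<alpha>. chromatic_sf A E (\<alpha> - sng c 1))"
      unfolding of_nat_sum chromatic_cont
      using pr[of A] by (intro sum.cong refl) (auto simp: in_keys_iff intro!: arg_cong[where f=card])
    also have "\<dots> = coef (P 1 * P 1 ^ card A) \<alpha>"
      by (simp add: coef_P_mult IH in_keys_iff Suc_le_eq)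
    finally show "chromatic_sf (insert a A) E \<alpha> = coef (P 1 ^ card (insert a A)) \<alpha>"
      using insert by simp
  qed
qed


lemma coef_P1_mult: "coef (P 1 * f) \<alpha> = (\<Sum>c\<in>ks \<alpha>. coef f (\<alpha> - sng c 1))"
  by (simp add: coef_P_mult in_keys_iff Suc_le_eq)

lemma keys_add_sng:
  fixes \<beta> :: "nat \<Rightarrow>\<^sub>0 nat"
  assumes "lk \<beta> c = 0" "0 < k"
  shows "ks (\<beta> + sng c k) = insert c (ks \<beta>)"
proof (rule set_eqI)
  fix x show "x \<in> ks (\<beta> + sng c k) \<longleftrightarrow> x \<in> insert c (ks \<beta>)"
    using assms by (cases "x = c") (auto simp: in_keys_iff lookup_add lookup_single when_def)
qed

lemma Q1:
  assumes "lk \<beta> c = 0"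
  shows "coef (P 1 ^ m) (\<beta> + sng c k) = of_nat (m choose k) * coef (P 1 ^ (m - k)) \<beta>"
  using assms
proof (induction m arbitrary: k \<beta>)
  case 0
  have "(\<beta> + sng c k = 0) \<longleftrightarrow> (\<beta> = 0 \<and> k = 0)"
  proof
    assume h: "\<beta> + sng c k = 0"
    have "lk (\<beta> + sng c k) x = 0" for x using h by simp
    then have "\<forall>x. lk \<beta> x = 0" "k = 0"
      by (auto simp: lookup_add) (metis lookup_single_eq add_is_0 lookup_add)
    then show "\<beta> = 0 \<and> k = 0" by (auto intro: poly_mapping_eqI)
  qed simp
  then show ?case by (auto simp: coef_one)
next
  case (Suc m)
  show ?case
  proof (cases k)
    case 0 then show ?thesis by simp
  next
    case (Suc k')
    have bc: "lk \<beta> c = 0" by fact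
    have ks: "ks (\<beta> + sng c k) = insert c (ks \<beta>)" using keys_add_sng[OF bc] Suc by simp
    have cnot: "c \<notin> ks \<beta>" using bc by (simp add: in_keys_iff)
    have e1: "\<beta> + sng c k - sng c 1 = \<beta> + sng c k'"
      by (rule poly_mapping_eqI) (auto simp: Suc lookup_add lookup_minus lookup_single when_def)
    have e2: "\<beta> + sng c k - sng d 1 = (\<beta> - sng d 1) + sng c k" if d: "d \<in> ks \<beta>" for d
    proof (rule poly_mapping_eqI)
      fix x
      have "d \<noteq> c" using d cnot by auto
      moreover have "1 \<le> lk \<beta> d" using d by (simp add: in_keys_iff)
      ultimately show "lk (\<beta> + sng c k - sng d 1) x = lk ((\<beta> - sng d 1) + sng c k) x"
        by (auto simp: lookup_add lookup_minus lookup_single when_def)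
    qed
    have bd: "lk (\<beta> - sng d 1) c = 0" for d using bc by (simp add: lookup_minus)
    have "coef (P 1 ^ Suc m) (\<beta> + sng c k) = (\<Sum>d\<in>insert c (ks \<beta>). coef (P 1 ^ m) (\<beta> + sng c k - sng d 1))"
      by (simp only: power_Suc coef_P1_mult ks)
    also have "\<dots> = coef (P 1 ^ m) (\<beta> + sng c k') + (\<Sum>d\<in>ks \<beta>. coef (P 1 ^ m) ((\<beta> - sng d 1) + sng c k))"
    proof -
      have "(\<Sum>d\<in>ks \<beta>. coef (P 1 ^ m) (\<beta> + sng c k - sng d 1)) = (\<Sum>d\<in>ks \<beta>. coef (P 1 ^ m) ((\<beta> - sng d 1) + sng c k))"
        by (rule sum.cong) (simp_all only: e2)
      then show ?thesis by (simp only: sum.insert[OF finite_keys cnot] e1)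
    qed
    also have "\<dots> = of_nat (m choose k') * coef (P 1 ^ (m - k')) \<beta>
                   + of_nat (m choose k) * (\<Sum>d\<in>ks \<beta>. coef (P 1 ^ (m - k)) (\<beta> - sng d 1))"
      using Suc.IH[OF bc] Suc.IH[OF bd] by (simp add: sum_distrib_left)
    also have "\<dots> = of_nat (Suc m choose k) * coef (P 1 ^ (Suc m - k)) \<beta>"
    proof -
      consider (lt) "k' < m" | (eq) "k' = m" | (gt) "m < k'" by linarith
      then show ?thesis
      proof cases
        case lt
        have "(\<Sum>d\<in>ks \<beta>. coef (P 1 ^ (m - k)) (\<beta> - sng d 1)) = coef (P 1 ^ (Suc (m - k))) \<beta>"
          unfolding power_Suc by (rule coef_P1_mult[symmetric])
        moreover have "m - k' = Suc (m - k)" "Suc m - k = Suc (m - k)" using lt Suc by auto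
        ultimately show ?thesis using Suc by (simp add: algebra_simps)
      next
        case eq then show ?thesis using Suc by simp
      next
        case gt then show ?thesis using Suc by (simp add: binomial_eq_0)
      qed
    qed
    finally show ?thesis .
  qed
qed


lemma alt_sum:
  fixes F :: "nat \<Rightarrow> rat"
  shows "(\<Sum>r\<le>N. (-1) ^ r * of_nat (N choose r) * (if r \<le> b then of_nat ((N - r) choose (b - r)) * F ((N - r) - (b - r)) else 0))
       = (if b = 0 then F N else 0)"
proof -
  consider (z) "b = 0" | (mid) "0 < b" "b \<le> N" | (big) "N < b" by linarith
  then show ?thesis
  proof cases
    case z
    have "(\<Sum>r\<le>N. (-1) ^ r * of_nat (N choose r) * (if r \<le> b then of_nat ((N - r) choose (b - r)) * F ((N - r) - (b - r)) else 0))
        = (\<Sum>r\<le>N. if r = 0 then F N else 0)"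
      using z by (intro sum.cong) auto
    also have "\<dots> = F N" by simp
    finally show ?thesis using z by simp
  next
    case mid
    have "(\<Sum>r\<le>N. (-1) ^ r * of_nat (N choose r) * (if r \<le> b then of_nat ((N - r) choose (b - r)) * F ((N - r) - (b - r)) else 0))
        = (\<Sum>r\<le>N. (if r \<le> b then (-1) ^ r * of_nat (b choose r) else 0) * (of_nat (N choose b) * F (N - b)))"
    proof (intro sum.cong refl)
      fix r assume r: "r \<in> {..N}"
      show "(-1) ^ r * of_nat (N choose r) * (if r \<le> b then of_nat ((N - r) choose (b - r)) * F ((N - r) - (b - r)) else 0)
          = (if r \<le> b then (-1) ^ r * of_nat (b choose r) else 0) * (of_nat (N choose b) * F (N - b))"
      proof (cases "r \<le> b")
        case True
        have cm: "(N choose b) * (b choose r) = (N choose r) * ((N - r) choose (b - r))"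
          using choose_mult[OF True mid(2)] .
        have e: "(N - r) - (b - r) = N - b" using True mid by simp
        have "(of_nat (N choose r) * of_nat ((N - r) choose (b - r)) :: rat) = of_nat (N choose b) * of_nat (b choose r)"
          using cm by (metis of_nat_mult)
        then show ?thesis using True e by (simp add: algebra_simps)
      qed simp
    qed
    also have "\<dots> = (\<Sum>r\<le>N. if r \<le> b then (-1) ^ r * of_nat (b choose r) else 0) * (of_nat (N choose b) * F (N - b))"
      by (simp add: sum_distrib_right)
    also have "(\<Sum>r\<le>N. if r \<le> b then (-1) ^ r * of_nat (b choose r) else 0) = (\<Sum>r\<le>b. (-1) ^ r * of_nat (b choose r) :: rat)"
    proof -
      have "(\<Sum>r\<le>N. if r \<le> b then (-1) ^ r * of_nat (b choose r) else 0) = (\<Sum>r\<in>{r\<in>{..N}. r \<le> b}. (-1) ^ r * of_nat (b choose r) :: rat)"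
        using sum.inter_filter[of "{..N}" "\<lambda>r. (-1) ^ r * of_nat (b choose r) :: rat" "\<lambda>r. r \<le> b"] by simp
      also have "{r\<in>{..N}. r \<le> b} = {..b}" using mid by auto
      finally show ?thesis .
    qed
    also have "\<dots> = 0" using choose_alternating_sum[OF mid(1)] .
    finally show ?thesis using mid by simp
  next
    case big
    have "(\<Sum>r\<le>N. (-1) ^ r * of_nat (N choose r) * (if r \<le> b then of_nat ((N - r) choose (b - r)) * F ((N - r) - (b - r)) else 0))
        = (\<Sum>r\<le>N. 0)"
      using big by (intro sum.cong) (auto simp: binomial_eq_0)
    then show ?thesis using big by simp
  qed
qed

lemma percol:
  assumes a: "1 \<le> lk \<alpha> c"
  shows "(\<Sum>r\<le>N. (-1) ^ r * of_nat (N choose r) * (if r + 1 \<le> lk \<alpha> c then coef (P 1 ^ (N - r)) (\<alpha> - sng c (r + 1)) else 0))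
       = (if lk \<alpha> c = 1 then coef (P 1 ^ N) (\<alpha> - sng c 1) else 0)"
proof -
  obtain b where b: "lk \<alpha> c = Suc b" using a by (cases "lk \<alpha> c") auto
  define \<beta> where "\<beta> = \<alpha> - sng c (lk \<alpha> c)"
  have bc: "lk \<beta> c = 0" by (simp add: \<beta>_def lookup_minus)
  have e: "\<alpha> - sng c (r + 1) = \<beta> + sng c (b - r)" if "r \<le> b" for r
    by (rule poly_mapping_eqI) (use that b in \<open>auto simp: \<beta>_def lookup_add lookup_minus lookup_single when_def\<close>)
  have "(\<Sum>r\<le>N. (-1) ^ r * of_nat (N choose r) * (if r + 1 \<le> lk \<alpha> c then coef (P 1 ^ (N - r)) (\<alpha> - sng c (r + 1)) else 0))
      = (\<Sum>r\<le>N. (-1) ^ r * of_nat (N choose r) * (if r \<le> b then of_nat ((N - r) choose (b - r)) * coef (P 1 ^ ((N - r) - (b - r))) \<beta> else 0))"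
  proof (intro sum.cong refl)
    fix r assume "r \<in> {..N}"
    show "(-1) ^ r * of_nat (N choose r) * (if r + 1 \<le> lk \<alpha> c then coef (P 1 ^ (N - r)) (\<alpha> - sng c (r + 1)) else 0)
        = (-1) ^ r * of_nat (N choose r) * (if r \<le> b then of_nat ((N - r) choose (b - r)) * coef (P 1 ^ ((N - r) - (b - r))) \<beta> else 0)"
    proof (cases "r \<le> b")
      case True
      then have h: "r + 1 \<le> lk \<alpha> c" using b by simp
      show ?thesis unfolding if_P[OF h] if_P[OF True] e[OF True] Q1[OF bc] ..
    next
      case False
      then have h: "\<not> r + 1 \<le> lk \<alpha> c" using b by simp
      show ?thesis unfolding if_not_P[OF h] if_not_P[OF False] ..
    qed
  qed
  also have "\<dots> = (if b = 0 then coef (P 1 ^ N) \<beta> else 0)" by (rule alt_sum)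
  also have "\<dots> = (if lk \<alpha> c = 1 then coef (P 1 ^ N) (\<alpha> - sng c 1) else 0)"
    using b by (auto simp: \<beta>_def)
  finally show ?thesis .
qed

lemma STAR:
  "Kop (coef (P 1 ^ N)) = coef (\<Sum>r\<le>N. sc ((-1) ^ r * of_nat (N choose r)) * (P (r + 1) * P 1 ^ (N - r)))"
proof (rule ext)
  fix \<alpha>
  have "coef (\<Sum>r\<le>N. sc ((-1) ^ r * of_nat (N choose r)) * (P (r + 1) * P 1 ^ (N - r))) \<alpha>
      = (\<Sum>r\<le>N. (-1) ^ r * of_nat (N choose r) * (\<Sum>c\<in>ks \<alpha>. if r + 1 \<le> lk \<alpha> c then coef (P 1 ^ (N - r)) (\<alpha> - sng c (r + 1)) else 0))"
    by (simp only: coef_sum coef_sc_mult coef_P_mult[OF zero_less_Suc[unfolded Suc_eq_plus1]])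
  also have "\<dots> = (\<Sum>c\<in>ks \<alpha>. \<Sum>r\<le>N. (-1) ^ r * of_nat (N choose r) * (if r + 1 \<le> lk \<alpha> c then coef (P 1 ^ (N - r)) (\<alpha> - sng c (r + 1)) else 0))"
    by (simp add: sum_distrib_left sum.swap[of _ "{..N}"])
  also have "\<dots> = Kop (coef (P 1 ^ N)) \<alpha>"
    unfolding Kop_def by (intro sum.cong refl percol) (simp add: in_keys_iff)
  finally show "Kop (coef (P 1 ^ N)) \<alpha> = coef (\<Sum>r\<le>N. sc ((-1) ^ r * of_nat (N choose r)) * (P (r + 1) * P 1 ^ (N - r))) \<alpha>" by simp
qed


lemma coef_P_alone: "0 < k \<Longrightarrow> coef (P k) \<alpha> = (\<Sum>d\<in>ks \<alpha>. if k \<le> lk \<alpha> d then coef 1 (\<alpha> - sng d k) else 0)"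
  using coef_P_mult[of k 1 \<alpha>] by simp

lemma extend_keys:
  fixes \<gamma> :: "nat \<Rightarrow>\<^sub>0 nat"
  assumes "ks \<gamma> \<subseteq> K" "finite K" "0 < k"
  shows "(\<Sum>d\<in>ks \<gamma>. if k \<le> lk \<gamma> d then g d else 0) = (\<Sum>d\<in>K. if k \<le> lk \<gamma> d then g d else 0)"
  using assms by (intro sum.mono_neutral_left) (auto simp: in_keys_iff)

lemma cond1:
  fixes \<alpha> :: "nat \<Rightarrow>\<^sub>0 nat"
  shows "(lk \<alpha> c = 1 \<and> 2 \<le> lk (\<alpha> - sng c 1) d \<and> \<alpha> - sng c 1 - sng d 2 = 0) \<longleftrightarrow> (\<alpha> = sng c 1 + sng d 2 \<and> c \<noteq> d)"
proof
  assume h: "lk \<alpha> c = 1 \<and> 2 \<le> lk (\<alpha> - sng c 1) d \<and> \<alpha> - sng c 1 - sng d 2 = 0"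
  then have cd: "c \<noteq> d" by (auto simp: lookup_minus)
  have z: "lk \<alpha> x \<le> (if c = x then 1 else 0) + (if d = x then 2 else 0)" for x
    using arg_cong[OF conjunct2[OF conjunct2[OF h]], of "\<lambda>f. lk f x"]
    by (cases "c = x"; cases "d = x") (simp_all add: lookup_minus lookup_single when_def)
  have "lk \<alpha> x = lk (sng c 1 + sng d 2) x" for x
    using z[of x] h cd by (cases "x = c"; cases "x = d") (auto simp: lookup_add lookup_minus lookup_single when_def)
  then show "\<alpha> = sng c 1 + sng d 2 \<and> c \<noteq> d" using cd by (auto intro: poly_mapping_eqI)
next
  assume h: "\<alpha> = sng c 1 + sng d 2 \<and> c \<noteq> d"
  then show "lk \<alpha> c = 1 \<and> 2 \<le> lk (\<alpha> - sng c 1) d \<and> \<alpha> - sng c 1 - sng d 2 = 0"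
    by (auto simp: lookup_add lookup_minus lookup_single when_def intro!: poly_mapping_eqI)
qed

lemma cond2:
  fixes \<alpha> :: "nat \<Rightarrow>\<^sub>0 nat"
  shows "(lk \<alpha> d = 2 \<and> 1 \<le> lk (\<alpha> - sng d 2) c \<and> \<alpha> - sng d 2 - sng c 1 = 0) \<longleftrightarrow> (\<alpha> = sng c 1 + sng d 2 \<and> c \<noteq> d)"
proof
  assume h: "lk \<alpha> d = 2 \<and> 1 \<le> lk (\<alpha> - sng d 2) c \<and> \<alpha> - sng d 2 - sng c 1 = 0"
  then have cd: "c \<noteq> d" by (auto simp: lookup_minus)
  have z: "lk \<alpha> x \<le> (if c = x then 1 else 0) + (if d = x then 2 else 0)" for x
    using arg_cong[OF conjunct2[OF conjunct2[OF h]], of "\<lambda>f. lk f x"]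
    by (cases "c = x"; cases "d = x") (simp_all add: lookup_minus lookup_single when_def)
  have "lk \<alpha> x = lk (sng c 1 + sng d 2) x" for x
    using z[of x] h cd by (cases "x = c"; cases "x = d") (auto simp: lookup_add lookup_minus lookup_single when_def)
  then show "\<alpha> = sng c 1 + sng d 2 \<and> c \<noteq> d" using cd by (auto intro: poly_mapping_eqI)
next
  assume h: "\<alpha> = sng c 1 + sng d 2 \<and> c \<noteq> d"
  then show "lk \<alpha> d = 2 \<and> 1 \<le> lk (\<alpha> - sng d 2) c \<and> \<alpha> - sng d 2 - sng c 1 = 0"
    by (auto simp: lookup_add lookup_minus lookup_single when_def intro!: poly_mapping_eqI)
qed

lemma keys_minus_sub: "ks (\<alpha> - \<beta>) \<subseteq> ks (\<alpha>::nat \<Rightarrow>\<^sub>0 nat)"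
  by (auto simp: in_keys_iff lookup_minus)

lemma KP2: "Kop (coef (P 2)) = coef (P 2 * P 1 - P 3)"
proof (rule ext)
  fix \<alpha> :: "nat \<Rightarrow>\<^sub>0 nat"
  let ?T = "\<lambda>c d. if \<alpha> = sng c 1 + sng d 2 \<and> c \<noteq> d then (1::rat) else 0"
  have L: "Kop (coef (P 2)) \<alpha> = (\<Sum>c\<in>ks \<alpha>. \<Sum>d\<in>ks \<alpha>. ?T c d)"
    unfolding Kop_def
  proof (intro sum.cong refl)
    fix c assume c: "c \<in> ks \<alpha>"
    have "coef (P 2) (\<alpha> - sng c 1) = (\<Sum>d\<in>ks \<alpha>. if 2 \<le> lk (\<alpha> - sng c 1) d then coef 1 (\<alpha> - sng c 1 - sng d 2) else 0)"
      by (simp only: coef_P_alone[of 2] zero_less_numeral extend_keys[OF keys_minus_sub finite_keys])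
    also have "\<dots> = (\<Sum>d\<in>ks \<alpha>. if lk \<alpha> c = 1 then ?T c d else 0)" if "lk \<alpha> c = 1"
    proof (intro sum.cong refl)
      fix d
      have eqv: "(2 \<le> lk (\<alpha> - sng c 1) d \<and> \<alpha> - sng c 1 - sng d 2 = 0) \<longleftrightarrow> (\<alpha> = sng c 1 + sng d 2 \<and> c \<noteq> d)"
        using cond1[of \<alpha> c d] that by blast
      show "(if 2 \<le> lk (\<alpha> - sng c 1) d then coef 1 (\<alpha> - sng c 1 - sng d 2) else 0) = (if lk \<alpha> c = 1 then ?T c d else 0)"
        using eqv that by (auto simp: coef_one)
    qed
    moreover have "?T c d = 0" if "lk \<alpha> c \<noteq> 1" for d
      using that by (auto simp: lookup_add lookup_single when_def split: if_splits)
    ultimately show "(if lk \<alpha> c = 1 then coef (P 2) (\<alpha> - sng c 1) else 0) = (\<Sum>d\<in>ks \<alpha>. ?T c d)"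
      by auto
  qed
  have R: "coef (P 2 * P 1 - P 3) \<alpha> = (\<Sum>d\<in>ks \<alpha>. \<Sum>c\<in>ks \<alpha>. ?T c d)"
  proof -
    have "coef (P 2 * P 1 - P 3) \<alpha> = (\<Sum>d\<in>ks \<alpha>. (if 2 \<le> lk \<alpha> d then coef (P 1) (\<alpha> - sng d 2) else 0)
                                    - (if 3 \<le> lk \<alpha> d then coef 1 (\<alpha> - sng d 3) else 0))"
      by (simp only: coef_diff coef_P_mult[of 2] coef_P_alone[of 3] zero_less_numeral sum_subtractf)
    also have "\<dots> = (\<Sum>d\<in>ks \<alpha>. \<Sum>c\<in>ks \<alpha>. ?T c d)"
    proof (intro sum.cong refl)
      fix d assume d: "d \<in> ks \<alpha>"
      define \<beta> where "\<beta> = \<alpha> - sng d (lk \<alpha> d)"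
      have bd: "lk \<beta> d = 0" by (simp add: \<beta>_def lookup_minus)
      have ab: "\<alpha> - sng d j = \<beta> + sng d (lk \<alpha> d - j)" if "j \<le> lk \<alpha> d" for j
        by (rule poly_mapping_eqI) (use that in \<open>auto simp: \<beta>_def lookup_add lookup_minus lookup_single when_def\<close>)
      have c3: "(if 3 \<le> lk \<alpha> d then coef 1 (\<alpha> - sng d 3) else 0) = (if lk \<alpha> d = 3 then coef 1 \<beta> else 0)"
      proof (cases "3 \<le> lk \<alpha> d")
        case True
        have "coef 1 (\<alpha> - sng d 3) = coef (P 1 ^ 0) (\<beta> + sng d (lk \<alpha> d - 3))" using ab[OF True] by simp
        also have "\<dots> = of_nat (0 choose (lk \<alpha> d - 3)) * coef (P 1 ^ 0) \<beta>" using Q1[OF bd, of 0 "lk \<alpha> d - 3"] by simp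
        finally show ?thesis using True by auto
      qed auto
      have c2: "(if 2 \<le> lk \<alpha> d then coef (P 1) (\<alpha> - sng d 2) else 0)
               = (if lk \<alpha> d = 2 then coef (P 1) \<beta> else if lk \<alpha> d = 3 then coef 1 \<beta> else 0)"
      proof (cases "2 \<le> lk \<alpha> d")
        case True
        have "coef (P 1) (\<alpha> - sng d 2) = coef (P 1 ^ 1) (\<beta> + sng d (lk \<alpha> d - 2))" using ab[OF True] by simp
        also have "\<dots> = of_nat (1 choose (lk \<alpha> d - 2)) * coef (P 1 ^ (1 - (lk \<alpha> d - 2))) \<beta>" by (rule Q1[OF bd])
        finally have e: "coef (P 1) (\<alpha> - sng d 2) = of_nat (1 choose (lk \<alpha> d - 2)) * coef (P 1 ^ (1 - (lk \<alpha> d - 2))) \<beta>" .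
        show ?thesis
        proof (cases "lk \<alpha> d = 2")
          case True then show ?thesis using e by simp
        next
          case F: False
          show ?thesis
          proof (cases "lk \<alpha> d = 3")
            case True then show ?thesis using e by simp
          next
            case False then have "1 < lk \<alpha> d - 2" using F \<open>2 \<le> lk \<alpha> d\<close> by linarith
            then show ?thesis using e F False by (simp add: binomial_eq_0)
          qed
        qed
      qed auto
      have "(if 2 \<le> lk \<alpha> d then coef (P 1) (\<alpha> - sng d 2) else 0) - (if 3 \<le> lk \<alpha> d then coef 1 (\<alpha> - sng d 3) else 0)
          = (if lk \<alpha> d = 2 then coef (P 1) \<beta> else 0)"
        unfolding c2 c3 by auto
      also have "\<dots> = (\<Sum>c\<in>ks \<alpha>. ?T c d)"
      proof (cases "lk \<alpha> d = 2")
        case True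
        then have b2: "\<beta> = \<alpha> - sng d 2" by (simp add: \<beta>_def)
        have "coef (P 1) \<beta> = (\<Sum>c\<in>ks \<alpha>. if 1 \<le> lk (\<alpha> - sng d 2) c then coef 1 (\<alpha> - sng d 2 - sng c 1) else 0)"
          unfolding b2 by (simp only: coef_P_alone[of 1] zero_less_one extend_keys[OF keys_minus_sub finite_keys])
        also have "\<dots> = (\<Sum>c\<in>ks \<alpha>. ?T c d)"
        proof (intro sum.cong refl)
          fix c
          have eqv: "(1 \<le> lk (\<alpha> - sng d 2) c \<and> \<alpha> - sng d 2 - sng c 1 = 0) \<longleftrightarrow> (\<alpha> = sng c 1 + sng d 2 \<and> c \<noteq> d)"
            using cond2[of \<alpha> d c] True by blast
          show "(if 1 \<le> lk (\<alpha> - sng d 2) c then coef 1 (\<alpha> - sng d 2 - sng c 1) else 0) = ?T c d"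
            using eqv by (auto simp: coef_one)
        qed
        finally show ?thesis using True by simp
      next
        case False
        then have "?T c d = 0" for c
          by (auto simp: lookup_add lookup_single when_def split: if_splits)
        then show ?thesis using False by simp
      qed
      finally show "(if 2 \<le> lk \<alpha> d then coef (P 1) (\<alpha> - sng d 2) else 0) - (if 3 \<le> lk \<alpha> d then coef 1 (\<alpha> - sng d 3) else 0)
          = (\<Sum>c\<in>ks \<alpha>. ?T c d)" .
    qed
    finally show ?thesis .
  qed
  show "Kop (coef (P 2)) \<alpha> = coef (P 2 * P 1 - P 3) \<alpha>"
    unfolding L R by (rule sum.swap)
qed


lemma sc_of_nat: "sc (of_nat n) = of_nat n"
  by (induction n) (simp_all add: sc_zero sc_add sc_one)

lemma sc_numeral: "sc (numeral n) = numeral n"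
  using sc_of_nat[of "numeral n"] by simp

lemma sc_neg_numeral: "sc (- numeral n) = - numeral n"
  by (simp add: sc_uminus sc_numeral)

lemma Kop_diff: "Kop (coef (f - g)) = (\<lambda>\<alpha>. Kop (coef f) \<alpha> - Kop (coef g) \<alpha>)"
  by (rule ext) (simp add: Kop_def sum_subtractf[symmetric] if_distrib cong: if_cong)

lemma coef_inj: "coef f = coef g \<Longrightarrow> f = g"
  by (simp add: Rep_ser_inject)

lemma chrom_tri: "Abs_ser (chromatic_sf triangle_V triangle_E) = P 1 * P 1 ^ 2 - 3 * (P 2 * P 1) + 2 * P 3"
proof -
  have V: "triangle_V = insert 0 (insert 1 {2})" by (auto simp: triangle_V_def)
  have c1: "chromatic_sf (insert 0 (insert 1 {2::nat})) triangle_E = Kop (chromatic_sf (insert 1 {2}) triangle_E)"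
    by (rule cone) (auto simp: triangle_E_def)
  have c2: "chromatic_sf (insert 1 {2::nat}) triangle_E = Kop (chromatic_sf {2} triangle_E)"
    by (rule cone) (auto simp: triangle_E_def)
  have c3: "chromatic_sf {2::nat} triangle_E = coef (P 1 ^ 1)"
    using indep_set[of "{2::nat}" triangle_E] by (simp add: triangle_E_def)
  have s1: "Kop (coef (P 1 ^ 1)) = coef (P 1 * P 1 - P 2)"
  proof -
    have "(\<Sum>r\<le>1. sc ((-1) ^ r * of_nat (1 choose r)) * (P (r + 1) * P 1 ^ (1 - r))) = P 1 * P 1 - P 2"
    proof -
      have e: "{..1::nat} = {0,1}" by auto
      show ?thesis by (simp add: e sc_one sc_uminus numeral_2_eq_2)
    qed
    then show ?thesis using STAR[of 1] by simp
  qed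
  have s2: "Kop (coef (P 1 * P 1)) = coef (P 1 * P 1 ^ 2 - 2 * (P 2 * P 1) + P 3)"
  proof -
    have "(\<Sum>r\<le>2. sc ((-1) ^ r * of_nat (2 choose r)) * (P (r + 1) * P 1 ^ (2 - r))) = P 1 * P 1 ^ 2 - 2 * (P 2 * P 1) + P 3"
    proof -
      have e: "{..2::nat} = {0,1,2}" by auto
      show ?thesis by (simp add: e sc_one sc_uminus sc_numeral algebra_simps numeral_2_eq_2 numeral_3_eq_3)
    qed
    moreover have "P 1 * P 1 = P 1 ^ 2" by (simp add: power2_eq_square)
    ultimately show ?thesis using STAR[of 2] by simp
  qed
  have "chromatic_sf triangle_V triangle_E = Kop (coef (P 1 * P 1 - P 2))"
    using V c1 c2 c3 s1 by simp
  also have "\<dots> = (\<lambda>\<alpha>. Kop (coef (P 1 * P 1)) \<alpha> - Kop (coef (P 2)) \<alpha>)" by (rule Kop_diff)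
  also have "\<dots> = coef (P 1 * P 1 ^ 2 - 2 * (P 2 * P 1) + P 3 - (P 2 * P 1 - P 3))"
    unfolding s2 KP2 by (rule ext) (simp only: coef_diff)
  also have "P 1 * P 1 ^ 2 - 2 * (P 2 * P 1) + P 3 - (P 2 * P 1 - P 3) = P 1 * P 1 ^ 2 - 3 * (P 2 * P 1) + 2 * P 3"
    by (simp add: algebra_simps)
  finally have "chromatic_sf triangle_V triangle_E = coef (P 1 * P 1 ^ 2 - 3 * (P 2 * P 1) + 2 * P 3)" .
  then show ?thesis by (simp only: Rep_ser_inverse)
qed

definition Ltri :: "(rat \<times> nat list) list" where
  "Ltri = [(1, [1,1,1]), (-3, [2,1]), (2, [3])]"

lemma Ltri_valid: "valid_plin Ltri" by (simp add: valid_plin_def Ltri_def)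

lemma chrom_tri_lin: "chromatic_sf triangle_V triangle_E = sf_lin Ltri"
proof -
  have "Abs_ser (sf_lin Ltri) = sc 1 * (P 1 * (P 1 * (P 1 * 1))) + (sc (- 3) * (P 2 * (P 1 * 1)) + (sc 2 * (P 3 * 1) + 0))"
    by (simp add: Abs_sf_lin Ltri_def)
  also have "\<dots> = P 1 * P 1 ^ 2 - 3 * (P 2 * P 1) + 2 * P 3"
    unfolding sc_one sc_neg_numeral sc_numeral by (simp add: algebra_simps power2_eq_square)
  finally show ?thesis using chrom_tri Abs_eq_iff by metis
qed

lemma conv_Ltri: "conv Ltri = [(1, {#1,1,1#}), (-3, {#2,1#}), (2, {#3#})]"
  by (simp add: conv_def Ltri_def)

lemma osg_vals: "osg {#1,1,1#} = 1" "osg {#2,1#} = -1" "osg {#3#} = 1"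
  by (simp_all add: osg_def)

lemma pm_vals: "pm {#1,1,1#} = P 1 ^ 3" "pm {#3#} = P 3"
  by (simp_all add: pm_def power3_eq_cube)

lemma part_a: "near_chromatic_sf triangle_V triangle_E = sf_add (sf_pow (psum 1) 3) (sf_smult 2 (psum 3))"
proof -
  have "Abs_ser (near_chromatic_sf triangle_V triangle_E) = lin2 (map (\<lambda>(a, m). ((1 + osg m) / 2 * a, m)) (conv Ltri))"
    using Abs_near[OF Ltri_valid chrom_tri_lin] lin2_half by simp
  also have "\<dots> = sc 1 * pm {#1,1,1#} + (sc 0 * pm {#2,1#} + (sc 2 * pm {#3#} + 0))"
    unfolding conv_Ltri by (simp add: lin2_def osg_def)
  also have "\<dots> = P 1 ^ 3 + sc 2 * P 3"
    unfolding sc_one sc_zero pm_vals by simp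
  also have "\<dots> = Abs_ser (sf_add (sf_pow (psum 1) 3) (sf_smult 2 (psum 3)))"
    by (simp add: Abs_add Abs_pow Abs_smult P_def)
  finally show ?thesis by (simp add: Abs_eq_iff)
qed


lemma chrom_star:
  assumes n: "1 \<le> n"
  shows "Abs_ser (chromatic_sf (star_V n) star_E)
       = (\<Sum>r\<le>n-1. sc ((-1) ^ r * of_nat ((n-1) choose r)) * (P (r + 1) * P 1 ^ (n - 1 - r)))"
proof -
  have V: "star_V n = insert 0 {1..<n}" using n by (auto simp: star_V_def)
  have c1: "chromatic_sf (insert 0 {1..<n}) star_E = Kop (chromatic_sf {1..<n} star_E)"
    by (rule cone) (auto simp: star_E_def)
  have c2: "chromatic_sf {1..<n} star_E = coef (P 1 ^ (n - 1))"
    using indep_set[of "{1..<n}" star_E] by (simp add: star_E_def)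
  have "chromatic_sf (star_V n) star_E = coef (\<Sum>r\<le>n-1. sc ((-1) ^ r * of_nat ((n-1) choose r)) * (P (r + 1) * P 1 ^ (n - 1 - r)))"
    unfolding V c1 c2 STAR ..
  then show ?thesis by (simp only: Rep_ser_inverse)
qed

definition Lstar :: "nat \<Rightarrow> (rat \<times> nat list) list" where
  "Lstar n = map (\<lambda>r. ((-1) ^ r * of_nat ((n-1) choose r), (r + 1) # replicate (n - 1 - r) 1)) [0..<n]"

lemma Lstar_valid: "valid_plin (Lstar n)"
  by (auto simp: valid_plin_def Lstar_def)

lemma sum_upt_atMost: "1 \<le> n \<Longrightarrow> sum_list (map f [0..<n]) = (\<Sum>r\<le>n-1. f r)"
proof -
  assume "1 \<le> n"
  then have "{0..<n} = {..n-1}" by auto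
  then show ?thesis by (metis sum_set_upt_conv_sum_list_nat atLeastLessThan_upt)
qed

lemma chrom_star_lin:
  assumes n: "1 \<le> n"
  shows "chromatic_sf (star_V n) star_E = sf_lin (Lstar n)"
proof -
  have "Abs_ser (sf_lin (Lstar n)) = sum_list (map (\<lambda>r. sc ((-1) ^ r * of_nat ((n-1) choose r)) * (P (r + 1) * P 1 ^ (n - 1 - r))) [0..<n])"
    by (simp add: Abs_sf_lin Lstar_def o_def prod_list_replicate)
  also have "\<dots> = Abs_ser (chromatic_sf (star_V n) star_E)"
    unfolding chrom_star[OF n] sum_upt_atMost[OF n] ..
  finally show ?thesis by (simp add: Abs_eq_iff)
qed

lemma osg_star: "osg (mset ((r + 1) # replicate k 1)) = (-1) ^ r"
  by (simp add: osg_def mset_replicate)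

lemma half_coef: "(1 + (-1) ^ r) / 2 * ((-1) ^ r * c) = (if even r then c else (0::rat))"
  by (cases "even r") auto

lemma part_b:
  assumes n: "1 \<le> n"
  shows "near_chromatic_sf (star_V n) star_E
             = sf_sum (\<lambda>r. sf_smult (of_nat ((n - 1) choose r))
                              (sf_mult (psum (r + 1)) (sf_pow (psum 1) (n - r - 1))))
                      {r. r \<le> n - 1 \<and> even r}"
proof -
  let ?X = "\<lambda>r. P (r + 1) * P 1 ^ (n - 1 - r)"
  have "Abs_ser (near_chromatic_sf (star_V n) star_E) = lin2 (map (\<lambda>(a, m). ((1 + osg m) / 2 * a, m)) (conv (Lstar n)))"
    using Abs_near[OF Lstar_valid chrom_star_lin[OF n]] lin2_half by simp
  also have "\<dots> = sum_list (map (\<lambda>r. sc (if even r then of_nat ((n-1) choose r) else 0) * ?X r) [0..<n])"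
  proof -
    have "lin2 (map (\<lambda>(a, m). ((1 + osg m) / 2 * a, m)) (conv (Lstar n)))
        = sum_list (map (\<lambda>r. sc ((1 + osg (mset ((r + 1) # replicate (n - 1 - r) 1))) / 2 * ((-1) ^ r * of_nat ((n-1) choose r)))
                     * pm (mset ((r + 1) # replicate (n - 1 - r) 1))) [0..<n])"
      by (simp only: lin2_def conv_def Lstar_def map_map o_def prod.case)
    also have "\<dots> = sum_list (map (\<lambda>r. sc (if even r then of_nat ((n-1) choose r) else 0) * ?X r) [0..<n])"
    proof (intro arg_cong[where f=sum_list] map_cong refl)
      fix r
      have "pm (mset ((r + 1) # replicate (n - 1 - r) 1)) = ?X r"
        unfolding pm_mset by (simp add: prod_list_replicate)
      then show "sc ((1 + osg (mset ((r + 1) # replicate (n - 1 - r) 1))) / 2 * ((-1) ^ r * of_nat ((n-1) choose r)))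
                     * pm (mset ((r + 1) # replicate (n - 1 - r) 1)) = sc (if even r then of_nat ((n-1) choose r) else 0) * ?X r"
        unfolding osg_star half_coef by simp
    qed
    finally show ?thesis .
  qed
  also have "\<dots> = (\<Sum>r\<in>{0..<n}. if even r then sc (of_nat ((n-1) choose r)) * ?X r else 0)"
    by (simp only: sum_set_upt_conv_sum_list_nat[symmetric] set_upt) (intro sum.cong refl, simp add: sc_zero)
  also have "\<dots> = (\<Sum>r\<in>{r\<in>{0..<n}. even r}. sc (of_nat ((n-1) choose r)) * ?X r)"
    by (rule sum.inter_filter[symmetric]) simp
  also have "{r\<in>{0..<n}. even r} = {r. r \<le> n - 1 \<and> even r}" using n by auto
  also have "(\<Sum>r\<in>{r. r \<le> n - 1 \<and> even r}. sc (of_nat ((n-1) choose r)) * ?X r)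
      = Abs_ser (sf_sum (\<lambda>r. sf_smult (of_nat ((n - 1) choose r))
                              (sf_mult (psum (r + 1)) (sf_pow (psum 1) (n - r - 1))))
                      {r. r \<le> n - 1 \<and> even r})"
    by (simp add: Abs_sum Abs_smult Abs_mult Abs_pow P_def diff_diff_left add.commute)
  finally show ?thesis by (simp add: Abs_eq_iff)
qed


definition HL :: "ser \<Rightarrow> nat multiset \<Rightarrow> rat \<Rightarrow> bool" where
  "HL f m0 c0 \<longleftrightarrow> (\<exists>L. f = lin2 L \<and> posL L \<and> (\<forall>x\<in>set L. snd x \<le> m0) \<and> G L m0 = c0)"

definition prodL :: "(rat \<times> nat multiset) list \<Rightarrow> (rat \<times> nat multiset) list \<Rightarrow> (rat \<times> nat multiset) list" where
  "prodL L1 L2 = concat (map (\<lambda>(a, m). map (\<lambda>(b, m'). (a * b, m + m')) L2) L1)"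

lemma lin2_single_prod: "lin2 (map (\<lambda>(b, m'). (a * b, m + m')) L2) = sc a * pm m * lin2 L2"
  by (induction L2) (auto simp: lin2_def sc_mult pm_plus algebra_simps)

lemma lin2_prodL: "lin2 (prodL L1 L2) = lin2 L1 * lin2 L2"
proof (induction L1)
  case Nil then show ?case by (simp add: prodL_def lin2_def)
next
  case (Cons x L1)
  obtain a m where x: "x = (a, m)" by (cases x)
  have "lin2 (prodL (x # L1) L2) = lin2 (map (\<lambda>(b, m'). (a * b, m + m')) L2) + lin2 (prodL L1 L2)"
    by (simp add: prodL_def x lin2_append)
  also have "\<dots> = sc a * pm m * lin2 L2 + lin2 L1 * lin2 L2" by (simp only: lin2_single_prod Cons.IH)
  finally show ?case by (simp add: x lin2_Cons distrib_right)
qed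

lemma posL_prodL: "posL L1 \<Longrightarrow> posL L2 \<Longrightarrow> posL (prodL L1 L2)"
  unfolding posL_def prodL_def by fastforce

lemma bound_prodL: "\<forall>x\<in>set L1. snd x \<le> m1 \<Longrightarrow> \<forall>y\<in>set L2. snd y \<le> m2 \<Longrightarrow> \<forall>z\<in>set (prodL L1 L2). snd z \<le> m1 + m2"
  unfolding prodL_def using add_mono by fastforce

lemma sum_eq_top:
  fixes m m1 m' m2 :: "nat multiset"
  assumes "m \<le> m1" "m' \<le> m2"
  shows "m + m' = m1 + m2 \<longleftrightarrow> m = m1 \<and> m' = m2"
proof
  assume e: "m + m' = m1 + m2"
  show "m = m1 \<and> m' = m2"
  proof (rule ccontr)
    assume "\<not> (m = m1 \<and> m' = m2)"
    then have "m < m1 \<or> m' < m2" using assms by auto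
    then have "m + m' < m1 + m2"
      using assms by (auto intro: add_less_le_mono add_le_less_mono)
    then show False using e by simp
  qed
qed simp

lemma G_single_prod:
  assumes "\<forall>y\<in>set L2. snd y \<le> m2" "m \<le> m1"
  shows "G (map (\<lambda>(b, m'). (a * b, m + m')) L2) (m1 + m2) = (if m = m1 then a * G L2 m2 else 0)"
  using assms(1)
proof (induction L2)
  case Nil then show ?case by (simp add: G_def)
next
  case (Cons y L2)
  obtain b m' where y: "y = (b, m')" by (cases y)
  have m': "m' \<le> m2" using Cons.prems y by simp
  have "G (map (\<lambda>(b, m'). (a * b, m + m')) (y # L2)) (m1 + m2)
      = (if m + m' = m1 + m2 then a * b else 0) + G (map (\<lambda>(b, m'). (a * b, m + m')) L2) (m1 + m2)"
    by (simp add: y G_Cons)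
  also have "\<dots> = (if m = m1 \<and> m' = m2 then a * b else 0) + (if m = m1 then a * G L2 m2 else 0)"
    using Cons sum_eq_top[OF assms(2) m'] by simp
  finally show ?case by (simp add: y G_Cons algebra_simps)
qed

lemma G_prodL:
  assumes "\<forall>x\<in>set L1. snd x \<le> m1" "\<forall>y\<in>set L2. snd y \<le> m2"
  shows "G (prodL L1 L2) (m1 + m2) = G L1 m1 * G L2 m2"
  using assms(1)
proof (induction L1)
  case Nil then show ?case by (simp add: G_def prodL_def)
next
  case (Cons x L1)
  obtain a m where x: "x = (a, m)" by (cases x)
  have m: "m \<le> m1" using Cons.prems x by simp
  have "G (prodL (x # L1) L2) (m1 + m2) = G (map (\<lambda>(b, m'). (a * b, m + m')) L2) (m1 + m2) + G (prodL L1 L2) (m1 + m2)"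
    by (simp add: prodL_def x G_append)
  also have "\<dots> = (if m = m1 then a * G L2 m2 else 0) + G L1 m1 * G L2 m2"
    using G_single_prod[OF assms(2) m] Cons by simp
  finally show ?case by (simp add: x G_Cons algebra_simps)
qed

lemma HL_mult: "HL f m1 c1 \<Longrightarrow> HL g m2 c2 \<Longrightarrow> HL (f * g) (m1 + m2) (c1 * c2)"
proof -
  assume "HL f m1 c1" "HL g m2 c2"
  then obtain L1 L2 where L1: "f = lin2 L1" "posL L1" "\<forall>x\<in>set L1. snd x \<le> m1" "G L1 m1 = c1"
    and L2: "g = lin2 L2" "posL L2" "\<forall>x\<in>set L2. snd x \<le> m2" "G L2 m2 = c2"
    unfolding HL_def by blast
  show ?thesis unfolding HL_def
  proof (intro exI conjI)
    show "f * g = lin2 (prodL L1 L2)" using L1 L2 by (simp add: lin2_prodL)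
    show "posL (prodL L1 L2)" using L1 L2 by (simp add: posL_prodL)
    show "\<forall>z\<in>set (prodL L1 L2). snd z \<le> m1 + m2" using L1(3) L2(3) by (rule bound_prodL)
    show "G (prodL L1 L2) (m1 + m2) = c1 * c2" using G_prodL[OF L1(3) L2(3)] L1 L2 by simp
  qed
qed

lemma HL_one: "HL 1 {#} 1"
  unfolding HL_def
  by (rule exI[of _ "[(1, {#})]"]) (simp add: lin2_def G_def posL_def sc_one pm_empty)

lemma HL_pow: "HL f m c \<Longrightarrow> HL (f ^ k) (repeat_mset k m) (c ^ k)"
proof (induction k)
  case 0 then show ?case using HL_one by simp
next
  case (Suc k)
  then have "HL (f * f ^ k) (m + repeat_mset k m) (c * c ^ k)" using HL_mult by blast
  then show ?case by (simp add: add.commute)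
qed


lemma pm_add_mset: "pm (add_mset a M) = P a * pm M" by (simp add: pm_def)

abbreviation Yf :: "nat \<Rightarrow> ser" where "Yf n \<equiv> Abs_ser (near_chromatic_sf (star_V n) star_E)"

lemma HL_Y:
  assumes odd: "odd n"
  shows "HL (Yf n) {#n#} 1"
proof -
  have n: "1 \<le> n" using odd by (cases n) auto
  define R where "R = filter even [0..<n]"
  have dR: "distinct R" by (simp add: R_def)
  have sR: "set R = {r. r \<le> n - 1 \<and> even r}" using n by (auto simp: R_def)
  define mr where "mr r = {#r + 1#} + replicate_mset (n - r - 1) (1::nat)" for r
  define L where "L = map (\<lambda>r. (of_nat ((n - 1) choose r) :: rat, mr r)) R"
  have "Yf n = (\<Sum>r\<in>{r. r \<le> n - 1 \<and> even r}. sc (of_nat ((n - 1) choose r)) * (P (r + 1) * P 1 ^ (n - r - 1)))"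
    unfolding part_b[OF n] by (simp add: Abs_sum Abs_smult Abs_mult Abs_pow P_def)
  also have "\<dots> = lin2 L"
  proof -
    have "lin2 L = sum_list (map (\<lambda>r. sc (of_nat ((n - 1) choose r)) * pm (mr r)) R)"
      by (simp add: lin2_def L_def o_def)
    also have "\<dots> = (\<Sum>r\<in>set R. sc (of_nat ((n - 1) choose r)) * pm (mr r))"
      by (rule sum_list_distinct_conv_sum_set[OF dR])
    finally show ?thesis unfolding sR by (simp add: mr_def pm_add_mset pm_replicate)
  qed
  finally have e: "Yf n = lin2 L" .
  have pos: "posL L" by (auto simp: posL_def L_def mr_def)
  have bnd: "\<forall>x\<in>set L. snd x \<le> {#n#}"
  proof
    fix x assume "x \<in> set L"
    then obtain r where r: "r \<in> set R" "x = (of_nat ((n - 1) choose r), mr r)" by (auto simp: L_def)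
    have rn: "r \<le> n - 1" using r sR by auto
    show "snd x \<le> {#n#}"
    proof (cases "r = n - 1")
      case True then show ?thesis using r n by (simp add: mr_def)
    next
      case False
      then have "r + 1 < n" "1 < n" using rn by auto
      then have "mr r < {#n#}" by (auto simp: mr_def)
      then show ?thesis using r by simp
    qed
  qed
  have G1: "G L {#n#} = 1"
  proof -
    have "G L {#n#} = sum_list (map (\<lambda>r. if mr r = {#n#} then of_nat ((n - 1) choose r) else 0) R)"
      by (simp only: G_def L_def map_map o_def prod.case)
    also have "\<dots> = (\<Sum>r\<in>set R. if mr r = {#n#} then of_nat ((n - 1) choose r) else 0)"
      by (rule sum_list_distinct_conv_sum_set[OF dR])
    also have "\<dots> = (\<Sum>r\<in>set R. if r = n - 1 then 1 else 0)"
    proof (intro sum.cong refl)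
      fix r assume r: "r \<in> set R"
      then have rn: "r \<le> n - 1" using sR by auto
      have "mr r = {#n#} \<longleftrightarrow> r = n - 1"
      proof
        assume "mr r = {#n#}"
        then have "size (mr r) = 1" by simp
        then have "n - r - 1 = 0" by (simp add: mr_def)
        then show "r = n - 1" using rn by simp
      next
        assume "r = n - 1" then show "mr r = {#n#}" using n by (simp add: mr_def)
      qed
      then show "(if mr r = {#n#} then of_nat ((n - 1) choose r) else 0) = (if r = n - 1 then 1 else (0::rat))"
        by auto
    qed
    also have "\<dots> = 1"
    proof -
      have "n - 1 \<in> set R" using sR odd n by auto
      then show ?thesis by simp
    qed
    finally show ?thesis .
  qed
  show ?thesis unfolding HL_def using e pos bnd G1 by blast
qed

definition lead :: "nat list \<Rightarrow> nat list \<Rightarrow> nat multiset" where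
  "lead ns e = sum_list (map (\<lambda>(n, k). replicate_mset k n) (zip ns e))"

definition mon :: "nat list \<Rightarrow> nat list \<Rightarrow> ser" where
  "mon ns e = prod_list (map (\<lambda>(n, k). Yf n ^ k) (zip ns e))"

lemma HL_mon: "\<forall>n\<in>set ns. odd n \<Longrightarrow> HL (mon ns e) (lead ns e) 1"
proof (induction ns arbitrary: e)
  case Nil then show ?case using HL_one by (simp add: mon_def lead_def)
next
  case (Cons n ns)
  show ?case
  proof (cases e)
    case Nil then show ?thesis using HL_one by (simp add: mon_def lead_def)
  next
    case (Cons k es)
    have "HL (Yf n ^ k * mon ns es) (repeat_mset k {#n#} + lead ns es) (1 ^ k * 1)"
      using HL_mult[OF HL_pow[OF HL_Y] Cons.IH] Cons.prems by simp
    then show ?thesis using Cons by (simp add: mon_def lead_def)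
  qed
qed

lemma set_lead: "set_mset (lead ns e) \<subseteq> set ns"
proof (induction ns arbitrary: e)
  case Nil then show ?case by (simp add: lead_def)
next
  case (Cons n ns)
  show ?case
  proof (cases e)
    case Nil then show ?thesis by (simp add: lead_def)
  next
    case (Cons k es)
    have "lead (n # ns) e = replicate_mset k n + lead ns es" by (simp add: lead_def Cons)
    then show ?thesis using Cons.IH[of es] by (auto split: if_splits)
  qed
qed

lemma lead_inj:
  "distinct ns \<Longrightarrow> length e = length ns \<Longrightarrow> length e' = length ns \<Longrightarrow> lead ns e = lead ns e' \<Longrightarrow> e = e'"
proof (induction ns arbitrary: e e')
  case Nil then show ?case by simp
next
  case (Cons n ns)
  obtain k es where e: "e = k # es" using Cons.prems by (cases e) auto
  obtain k' es' where e': "e' = k' # es'" using Cons.prems by (cases e') auto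
  have eq: "replicate_mset k n + lead ns es = replicate_mset k' n + lead ns es'"
    using Cons.prems by (simp add: e e' lead_def)
  have nn: "n \<notin> set ns" using Cons.prems by simp
  have c0: "count (lead ns x) n = 0" for x using set_lead[of ns x] nn by (meson count_inI subsetD)
  have "k = k'" using arg_cong[OF eq, of "\<lambda>M. count M n"] c0 by simp
  moreover have "lead ns es = lead ns es'" using eq \<open>k = k'\<close> by simp
  ultimately show ?case using Cons e e' by simp
qed


lemma choose_list:
  "\<forall>y\<in>set ys. \<exists>n. Q n \<and> y = f n \<Longrightarrow> \<exists>ns. ys = map f ns \<and> (\<forall>n\<in>set ns. Q n)"
proof (induction ys)
  case Nil then show ?case by simp
next
  case (Cons y ys)
  then obtain ns where ns: "ys = map f ns" "\<forall>n\<in>set ns. Q n" by auto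
  obtain n where n: "Q n" "y = f n" using Cons.prems by auto
  show ?case by (rule exI[of _ "n # ns"]) (use ns n in auto)
qed

lemma part_c: "alg_indep_Q {near_chromatic_sf (star_V n) star_E | n. odd n}"
  unfolding alg_indep_Q_def
proof (intro allI impI)
  fix ys M and c :: "nat list \<Rightarrow> rat"
  assume H: "distinct ys \<and> set ys \<subseteq> {near_chromatic_sf (star_V n) star_E | n. odd n} \<and> finite M \<and>
        (\<forall>e\<in>M. length e = length ys) \<and> sf_sum (\<lambda>e. sf_smult (c e) (sf_monomial ys e)) M = sf_zero"
  then have dys: "distinct ys" and sub: "set ys \<subseteq> {near_chromatic_sf (star_V n) star_E | n. odd n}"
    and finM: "finite M" and lenM: "\<forall>e\<in>M. length e = length ys"
    and zero: "sf_sum (\<lambda>e. sf_smult (c e) (sf_monomial ys e)) M = sf_zero" by auto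
  obtain ns where ys_eq: "ys = map (\<lambda>n. near_chromatic_sf (star_V n) star_E) ns" and odd: "\<forall>n\<in>set ns. odd n"
    using choose_list[of ys odd "\<lambda>n. near_chromatic_sf (star_V n) star_E"] sub by blast
  have dns: "distinct ns" using dys ys_eq by (simp add: distinct_map)
  have lenM': "\<forall>e\<in>M. length e = length ns" using lenM ys_eq by simp
  have monE: "Abs_ser (sf_monomial ys e) = mon ns e" for e
    unfolding Abs_monomial ys_eq mon_def zip_map1 map_map o_def by (simp add: case_prod_unfold)
  have zeroS: "(\<Sum>e\<in>M. sc (c e) * mon ns e) = 0"
    using arg_cong[OF zero, of Abs_ser] by (simp add: Abs_sum Abs_smult monE Abs_zero)
  have "\<forall>e. \<exists>L. mon ns e = lin2 L \<and> posL L \<and> (\<forall>x\<in>set L. snd x \<le> lead ns e) \<and> G L (lead ns e) = 1"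
    using HL_mon[OF odd] unfolding HL_def by blast
  then obtain Lf where Lf: "\<And>e. mon ns e = lin2 (Lf e)" "\<And>e. posL (Lf e)"
      "\<And>e. \<forall>x\<in>set (Lf e). snd x \<le> lead ns e" "\<And>e. G (Lf e) (lead ns e) = 1"
    by metis
  show "\<forall>e\<in>M. c e = 0"
  proof (rule ccontr)
    assume "\<not> (\<forall>e\<in>M. c e = 0)"
    let ?M' = "{e \<in> M. c e \<noteq> 0}"
    have ne: "?M' \<noteq> {}" "finite ?M'" using \<open>\<not> _\<close> finM by auto
    obtain e0 where e0: "e0 \<in> ?M'" "lead ns e0 = Max (lead ns ` ?M')"
    proof -
      have "Max (lead ns ` ?M') \<in> lead ns ` ?M'" using ne by (intro Max_in) auto
      then show ?thesis using that by auto
    qed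
    have lt: "lead ns e < lead ns e0" if e: "e \<in> ?M'" "e \<noteq> e0" for e
    proof -
      have "lead ns e \<le> lead ns e0" using e e0 ne by simp
      moreover have "lead ns e \<noteq> lead ns e0"
        using lead_inj[OF dns] lenM' e e0 by blast
      ultimately show ?thesis by simp
    qed
    define S where "S = (\<Union>e\<in>M. set (map snd (Lf e)))"
    have finS: "finite S" using finM by (simp add: S_def)
    have posS: "\<forall>m\<in>S. 0 \<notin># m" using Lf(2) by (auto simp: S_def posL_def)
    have "0 = (\<Sum>e\<in>M. sc (c e) * (\<Sum>m\<in>S. sc (G (Lf e) m) * pm m))"
    proof -
      have "(\<Sum>e\<in>M. sc (c e) * mon ns e) = (\<Sum>e\<in>M. sc (c e) * (\<Sum>m\<in>S. sc (G (Lf e) m) * pm m))"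
      proof (intro sum.cong refl)
        fix e assume "e \<in> M"
        then have "set (map snd (Lf e)) \<subseteq> S" by (auto simp: S_def)
        then show "sc (c e) * mon ns e = sc (c e) * (\<Sum>m\<in>S. sc (G (Lf e) m) * pm m)"
          using Lf(1) lin2_group[OF finS] by simp
      qed
      then show ?thesis using zeroS by simp
    qed
    also have "\<dots> = (\<Sum>e\<in>M. \<Sum>m\<in>S. sc (c e * G (Lf e) m) * pm m)"
      by (simp add: sum_distrib_left sc_mult mult.assoc)
    also have "\<dots> = (\<Sum>m\<in>S. sc (\<Sum>e\<in>M. c e * G (Lf e) m) * pm m)"
      by (subst sum.swap) (simp add: sc_sum sum_distrib_right)
    finally have "(\<Sum>m\<in>S. sc (\<Sum>e\<in>M. c e * G (Lf e) m) * pm m) = 0" by simp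
    then have z: "\<forall>m\<in>S. (\<Sum>e\<in>M. c e * G (Lf e) m) = 0" by (rule lin_indep[OF finS posS])
    have "lead ns e0 \<in> set (map snd (Lf e0))" using Lf(4)[of e0] G_notin by fastforce
    then have inS: "lead ns e0 \<in> S" using e0 by (auto simp: S_def)
    have "(\<Sum>e\<in>M. c e * G (Lf e) (lead ns e0)) = (\<Sum>e\<in>{e0}. c e * G (Lf e) (lead ns e0))"
    proof (rule sum.mono_neutral_right)
      show "finite M" by fact
      show "{e0} \<subseteq> M" using e0 by simp
      show "\<forall>e\<in>M - {e0}. c e * G (Lf e) (lead ns e0) = 0"
      proof
        fix e assume e: "e \<in> M - {e0}"
        show "c e * G (Lf e) (lead ns e0) = 0"
        proof (cases "c e = 0")
          case False
          then have "lead ns e < lead ns e0" using lt e by auto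
          then have "lead ns e0 \<notin> set (map snd (Lf e))" using Lf(3)[of e] by fastforce
          then show ?thesis by (simp add: G_notin)
        qed simp
      qed
    qed
    also have "\<dots> = c e0" using Lf(4) by simp
    finally show False using z inS e0 by simp
  qed
qed


theorem mainTheorem2:
  shows "near_chromatic_sf triangle_V triangle_E
           = sf_add (sf_pow (psum 1) 3) (sf_smult 2 (psum 3))
       \<and> (\<forall>n::nat. n \<ge> 1 \<longrightarrow>
           near_chromatic_sf (star_V n) star_E
             = sf_sum (\<lambda>r. sf_smult (of_nat ((n - 1) choose r))
                              (sf_mult (psum (r + 1)) (sf_pow (psum 1) (n - r - 1))))
                      {r. r \<le> n - 1 \<and> even r})
       \<and> alg_indep_Q {near_chromatic_sf (star_V n) star_E | n. odd n}"
  using part_a part_b part_c by blast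

end
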